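(* Let $\alpha=(\alpha_1,\dots,\alpha_\ell)$ be a composition. The antipode $\mathcal{S}$ of $\mathrm{QSym}$ satisfies $\mathcal{S}(S_\alpha)=(-1)^\ell S_{(\alpha_\ell,\dots,\alpha_1)}$.
   Context: $\mathrm{QSym}$ is the Hopf algebra of quasisymmetric functions with monomial basis $M_\alpha=\sum_{i_1<\cdots<i_\ell}x_{i_1}^{\alpha_1}\cdots x_{i_\ell}^{\alpha_\ell}$, product the ordinary product of power series and coproduct $\Delta(M_\alpha)=\sum_{\beta\gamma=\alpha}M_\beta\otimes M_\gamma$ (deconcatenation). For compositions $\alpha,\beta$ of $n$, $\beta\le\alpha$ means $\{\beta_1,\beta_1+\beta_2,\dots\}\subseteq\{\alpha_1,\alpha_1+\alpha_2,\dots\}$ (partial sums, excluding the total). Shuffle functions: for $\alpha=(\alpha_1,\dots,\alpha_\ell)$ let $\mathrm{OtE}(\alpha)=\{i:\alpha_i\text{ odd},\ \alpha_{i+1}\text{ even}\}=\{i_1<\cdots<i_k\}$ and $m_o(\alpha)=(\alpha_1+\cdots+\alpha_{i_1},\ \alpha_{i_1+1}+\cdots+\alpha_{i_2},\ \dots,\ \alpha_{i_k+1}+\cdots+\alpha_\ell)$. For $m_o(\alpha)\le\beta\le\alpha$, each part $\beta_i$ is a sum of a block of consecutive parts of $\alpha$; with $\mathrm{O}(i),\mathrm{E}(i)$ the numbers of odd and even parts of that block put $c_\alpha^\beta=\prod_i\frac{1}{\mathrm{O}(i)!\mathrm{E}(i)!}$. Then $S_\alpha=\sum_{m_o(\alpha)\le\beta\le\alpha}c_\alpha^\beta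 M_\beta$. *)

theory Defs
  imports Complex_Main "HOL-Library.Poly_Mapping"
begin

text \<open>A monomial is a finitely supported exponent vector; a formal power series
  is its coefficient function.\<close>
type_synonym fps_q = "(nat \<Rightarrow>\<^sub>0 nat) \<Rightarrow> rat"

definition ps_one :: fps_q where
  "ps_one e = (if e = 0 then 1 else 0)"

definition ps_mult :: "fps_q \<Rightarrow> fps_q \<Rightarrow> fps_q" where
  "ps_mult f g e = (\<Sum>p\<in>{p. fst p + snd p = e}. f (fst p) * g (snd p))"

definition ps_add :: "fps_q \<Rightarrow> fps_q \<Rightarrow> fps_q" where
  "ps_add f g e = f e + g e"

definition ps_neg :: "fps_q \<Rightarrow> fps_q" where
  "ps_neg f e = - f e"

definition ps_zero :: fps_q where
  "ps_zero e = 0"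

text \<open>M_alpha = sum over i_1 < ... < i_l of x_{i_1}^{alpha_1} ... x_{i_l}^{alpha_l}:
  the coefficient of a monomial is 1 iff its nonzero exponents, read in increasing
  order of the variable index, form alpha.\<close>
definition monoM :: "nat list \<Rightarrow> fps_q" where
  "monoM \<alpha> e = (if map (Poly_Mapping.lookup e) (sorted_list_of_set (Poly_Mapping.keys e)) = \<alpha> then 1 else 0)"

text \<open>The antipode of the connected graded bialgebra QSym (product of power series,
  deconcatenation coproduct) is determined by
  sum_{beta gamma = alpha} S(M_beta) M_gamma = epsilon(M_alpha);
  solving for the term with gamma empty gives the recursion below.\<close>
function antipodeM :: "nat list \<Rightarrow> fps_q" where
  "antipodeM \<alpha> = (if \<alpha> = [] then ps_one
     else ps_neg (foldr ps_add
       (map (\<lambda>i. ps_mult (antipodeM (take i \<alpha>)) (monoM (drop i \<alpha>))) [0..<length \<alpha>])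
       ps_zero))"
  by pat_completeness auto
termination by (relation "measure length") auto

definition is_comp :: "nat list \<Rightarrow> bool" where
  "is_comp \<alpha> \<longleftrightarrow> (\<forall>a\<in>set \<alpha>. 0 < a)"

definition psums :: "nat list \<Rightarrow> nat set" where
  "psums \<alpha> = {sum_list (take i \<alpha>) | i. 0 < i \<and> i < length \<alpha>}"

definition comp_le :: "nat list \<Rightarrow> nat list \<Rightarrow> bool" where
  "comp_le \<beta> \<alpha> \<longleftrightarrow> psums \<beta> \<subseteq> psums \<alpha>"

text \<open>The composition of n whose set of partial sums is S.\<close>
definition comp_of_set :: "nat \<Rightarrow> nat set \<Rightarrow> nat list" where
  "comp_of_set n S = (let L = 0 # sorted_list_of_set S @ [n]
     in map (\<lambda>i. L ! Suc i - L ! i) [0..<length L - 1])"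

text \<open>OtE(alpha), 1-indexed: alpha_i odd and alpha_{i+1} even.\<close>
definition OtE :: "nat list \<Rightarrow> nat set" where
  "OtE \<alpha> = {i. 1 \<le> i \<and> i < length \<alpha> \<and> odd (\<alpha> ! (i - 1)) \<and> even (\<alpha> ! i)}"

definition m_o :: "nat list \<Rightarrow> nat list" where
  "m_o \<alpha> = (if \<alpha> = [] then []
     else comp_of_set (sum_list \<alpha>) ((\<lambda>i. sum_list (take i \<alpha>)) ` OtE \<alpha>))"

text \<open>Blocks of consecutive parts of alpha whose sums are the parts of beta (for beta <= alpha).\<close>
fun blocks :: "nat list \<Rightarrow> nat list \<Rightarrow> nat list list" where
  "blocks \<alpha> [] = []"
| "blocks \<alpha> (b # \<beta>) =
     (let k = (LEAST k. sum_list (take k \<alpha>) = b) in take k \<alpha> # blocks (drop k \<alpha>) \<beta>)"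

definition coeff_c :: "nat list \<Rightarrow> nat list \<Rightarrow> rat" where
  "coeff_c \<alpha> \<beta> = prod_list (map (\<lambda>B. 1 / (of_nat (fact (length (filter odd B)))
                                          * of_nat (fact (length (filter even B)))))
                               (blocks \<alpha> \<beta>))"

definition shuffle_index :: "nat list \<Rightarrow> nat list set" where
  "shuffle_index \<alpha> = {\<beta>. is_comp \<beta> \<and> sum_list \<beta> = sum_list \<alpha>
                          \<and> comp_le (m_o \<alpha>) \<beta> \<and> comp_le \<beta> \<alpha>}"

definition shuffleS :: "nat list \<Rightarrow> fps_q" where
  "shuffleS \<alpha> e = (\<Sum>\<beta>\<in>shuffle_index \<alpha>. coeff_c \<alpha> \<beta> * monoM \<beta> e)"

text \<open>The antipode, extended linearly, applied to S_alpha = sum c_alpha^beta M_beta.\<close>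
definition antipode_shuffleS :: "nat list \<Rightarrow> fps_q" where
  "antipode_shuffleS \<alpha> e = (\<Sum>\<beta>\<in>shuffle_index \<alpha>. coeff_c \<alpha> \<beta> * antipodeM \<beta> e)"

end

theory Submission
  imports Defs
begin



definition nz :: "nat list \<Rightarrow> nat list" where "nz u = filter (\<lambda>x. x \<noteq> 0) u"

fun splits :: "nat list \<Rightarrow> (nat list \<times> nat list) list" where
  "splits [] = [([],[])]"
| "splits (x#w) = concat (map (\<lambda>a. map (\<lambda>(u,v). (a#u, (x-a)#v)) (splits w)) [0..<Suc x])"

fun rcn :: "nat list \<Rightarrow> nat list \<Rightarrow> rat" where
  "rcn [] P = (if P = [] then 1 else 0)"
| "rcn (y#x) P = (\<Sum>j<length P. if sum_list (drop j P) = y then rcn x (take j P) else 0)"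

definition T :: "nat list \<Rightarrow> nat list \<Rightarrow> nat list \<Rightarrow> rat" where
  "T P Q w = sum_list (map (\<lambda>(u,v). rcn (nz u) P * (if nz v = Q then 1 else 0)) (splits w))"

lemma sum_list_sum_swap:
  "sum_list (map (\<lambda>x. \<Sum>a\<in>A. f x a) xs) = (\<Sum>a\<in>A. sum_list (map (\<lambda>x. f x a) xs))"
  by (induction xs) (auto simp: sum.distrib)

lemma sum_list_cmult: "sum_list (map (\<lambda>x. c * f x) xs) = (c::rat) * sum_list (map f xs)"
  by (induction xs) (auto simp: algebra_simps)

lemma sum_list_map_concat: "sum_list (map f (concat xss)) = sum_list (map (\<lambda>xs. sum_list (map f xs)) xss)"
  by (induction xss) auto

lemma T_Nil: "T P Q [] = (if P = [] \<and> Q = [] then 1 else 0)"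
  by (simp add: T_def nz_def)

lemma T_Cons: "T P Q (x#w) = (\<Sum>a\<in>{0..x}. sum_list (map (\<lambda>(u,v). rcn (nz (a#u)) P * (if nz ((x-a)#v) = Q then 1 else 0)) (splits w)))"
  unfolding T_def
  by (simp add: sum_list_map_concat comp_def case_prod_unfold interv_sum_list_conv_sum_set_nat atLeastLessThanSuc_atLeastAtMost del: upt_Suc)

lemma nz_Cons0[simp]: "nz (0#u) = nz u" by (simp add: nz_def)
lemma nz_Cons[simp]: "a \<noteq> 0 \<Longrightarrow> nz (a#u) = a # nz u" by (simp add: nz_def)

lemma sum_list_zero_pair[simp]: "sum_list (map (\<lambda>(u,v). (0::rat)) xs) = 0"
  by (induction xs) auto

lemma sum_list_if_mult: "sum_list (map (\<lambda>p. (if b then f p else 0) * (g p::rat)) xs) = (if b then sum_list (map (\<lambda>p. f p * g p) xs) else 0)"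
  by (induction xs) auto

lemma T_Cons0: "T P Q (0#w) = T P Q w"
  by (simp add: T_Cons T_def case_prod_unfold comp_def)

lemma T_Cons_pos:
  assumes x: "x > 0"
  shows "T P Q (x#w) =
    (if Q \<noteq> [] \<and> hd Q = x then T P (tl Q) w else 0)
  + (\<Sum>j<length P. if sum_list (drop j P) = x then T (take j P) Q w else 0)
  + (\<Sum>a\<in>{0<..<x}. \<Sum>j<length P. if sum_list (drop j P) = a \<and> Q \<noteq> [] \<and> hd Q = x - a then T (take j P) (tl Q) w else 0)"
proof -
  have split: "{0..x} = insert 0 (insert x {0<..<x})" using x by auto
  have a0: "sum_list (map (\<lambda>(u,v). rcn (nz (0#u)) P * (if nz (x#v) = Q then 1 else 0)) (splits w))
     = (if Q \<noteq> [] \<and> hd Q = x then T P (tl Q) w else 0)"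
    using x by (cases Q) (auto simp: T_def)
  have ax: "sum_list (map (\<lambda>(u,v). rcn (nz (x#u)) P * (if nz (0#v) = Q then 1 else 0)) (splits w))
     = (\<Sum>j<length P. if sum_list (drop j P) = x then T (take j P) Q w else 0)"
    using x apply (simp only: T_def case_prod_unfold nz_Cons nz_Cons0 rcn.simps sum_distrib_right sum_list_sum_swap sum_list_if_mult)
    done
  have am: "sum_list (map (\<lambda>(u,v). rcn (nz (a#u)) P * (if nz ((x-a)#v) = Q then 1 else 0)) (splits w))
     = (\<Sum>j<length P. if sum_list (drop j P) = a \<and> Q \<noteq> [] \<and> hd Q = x - a then T (take j P) (tl Q) w else 0)"
    if "a \<in> {0<..<x}" for a
  proof -
    have h: "a \<noteq> 0" "x - a \<noteq> 0" using that by auto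
    show ?thesis
      apply (simp only: T_def case_prod_unfold nz_Cons[OF h(1)] nz_Cons[OF h(2)] rcn.simps sum_distrib_right sum_list_sum_swap)
      apply (rule sum.cong, simp)
      apply (cases Q)
      apply (auto simp: sum_list_if_mult)
      done
  qed
  have "T P Q (x#w) = sum_list (map (\<lambda>(u,v). rcn (nz (0#u)) P * (if nz (x#v) = Q then 1 else 0)) (splits w))
     + (sum_list (map (\<lambda>(u,v). rcn (nz (x#u)) P * (if nz (0#v) = Q then 1 else 0)) (splits w))
     + (\<Sum>a\<in>{0<..<x}. sum_list (map (\<lambda>(u,v). rcn (nz (a#u)) P * (if nz ((x-a)#v) = Q then 1 else 0)) (splits w))))"
    unfolding T_Cons split using x by simp
  also have "\<dots> = (if Q \<noteq> [] \<and> hd Q = x then T P (tl Q) w else 0)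
  + ((\<Sum>j<length P. if sum_list (drop j P) = x then T (take j P) Q w else 0)
  + (\<Sum>a\<in>{0<..<x}. \<Sum>j<length P. if sum_list (drop j P) = a \<and> Q \<noteq> [] \<and> hd Q = x - a then T (take j P) (tl Q) w else 0))"
    by (simp only: a0 ax sum.cong[OF refl am])
  finally show ?thesis by (simp only: add.assoc)
qed

definition S :: "nat list \<Rightarrow> nat list \<Rightarrow> rat" where
  "S \<alpha> w = (\<Sum>i\<le>length \<alpha>. (-1)^i * T (take i \<alpha>) (drop i \<alpha>) w)"

lemma alt_tel: "(\<Sum>i\<le>n. (-1)^i * f i) + (\<Sum>i<n. (-1)^i * f (Suc i)) = (f 0::rat)"
  by (induction n) (auto simp: algebra_simps)

lemma sum_if_less: "(\<Sum>i\<le>n. (-1)^i * (if i < n then g i else 0)) = (\<Sum>i<n. (-1)^i * (g i::rat))"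
proof -
  have "(\<Sum>i\<le>n. (-1)^i * (if i < n then g i else 0)) = (\<Sum>i\<in>{..<n}. (-1)^i * (if i < n then g i else 0))"
    by (rule sum.mono_neutral_right) auto
  then show ?thesis by simp
qed

lemma sum_delta_cond: "finite A \<Longrightarrow> (\<Sum>a\<in>A. if a = c \<and> R a then g else 0) = (if c \<in> A \<and> R c then g else (0::rat))"
proof -
  assume "finite A"
  have "(\<Sum>a\<in>A. if a = c \<and> R a then g else 0) = (\<Sum>a\<in>A. if a = c then (if R c then g else 0) else 0)"
    by (rule sum.cong) auto
  also have "\<dots> = (if c \<in> A \<and> R c then g else 0)" using \<open>finite A\<close> by (simp add: sum.delta)
  finally show ?thesis .
qed

lemma is_comp_take: "is_comp \<alpha> \<Longrightarrow> is_comp (take i \<alpha>)"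
  by (auto simp: is_comp_def dest: in_set_takeD)
lemma is_comp_drop: "is_comp \<alpha> \<Longrightarrow> is_comp (drop i \<alpha>)"
  by (auto simp: is_comp_def dest: in_set_dropD)

lemma sum_take_mono_strict:
  assumes "is_comp \<alpha>" "j < i" "i \<le> length \<alpha>"
  shows "sum_list (take j \<alpha>) < sum_list (take i \<alpha>)"
proof -
  have "take i \<alpha> = take j \<alpha> @ take (i - j) (drop j \<alpha>)"
    using assms by (metis le_add_diff_inverse less_imp_le_nat take_add)
  moreover have "take (i - j) (drop j \<alpha>) \<noteq> []" using assms by simp
  moreover have "is_comp (take (i - j) (drop j \<alpha>))" using assms by (simp add: is_comp_take is_comp_drop)
  ultimately show ?thesis
    by (metis add_less_cancel_left is_comp_def bot_nat_0.not_eq_extremum list.set_sel(1) member_le_sum_list not_less_iff_gr_or_eq sum_list_append sum_list_eq_0_iff le_add1 add_0_right)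
qed

lemma sum_drop_take: "j \<le> i \<Longrightarrow> sum_list (drop j (take i (\<alpha>::nat list))) = sum_list (take i \<alpha>) - sum_list (take j \<alpha>)"
proof -
  assume "j \<le> i"
  have "sum_list (take i \<alpha>) = sum_list (take j (take i \<alpha>)) + sum_list (drop j (take i \<alpha>))"
    by (metis append_take_drop_id sum_list_append)
  then show ?thesis using \<open>j \<le> i\<close> by (simp add: min_absorb1)
qed

lemma S_pos:
  assumes c: "is_comp \<alpha>" and x: "x > 0"
  shows "S \<alpha> (x#w) = 0"
proof -
  define s where "s i = sum_list (take i \<alpha>)" for i
  define l where "l = length \<alpha>"
  define f where "f i = (\<Sum>j<i. if s i - s j = x then T (take j \<alpha>) (drop i \<alpha>) w else 0)" for i
  have key: "T (take i \<alpha>) (drop i \<alpha>) (x#w) = f i + (if i < l then f (Suc i) else 0)" if il: "i \<le> l" for i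
  proof -
    have t2: "(\<Sum>j<length (take i \<alpha>). if sum_list (drop j (take i \<alpha>)) = x then T (take j (take i \<alpha>)) (drop i \<alpha>) w else 0) = f i"
      using il unfolding f_def s_def l_def by (auto simp: sum_drop_take min_absorb2 intro!: sum.cong)
    have t13: "(if drop i \<alpha> \<noteq> [] \<and> hd (drop i \<alpha>) = x then T (take i \<alpha>) (tl (drop i \<alpha>)) w else 0)
      + (\<Sum>a\<in>{0<..<x}. \<Sum>j<length (take i \<alpha>). if sum_list (drop j (take i \<alpha>)) = a \<and> drop i \<alpha> \<noteq> [] \<and> hd (drop i \<alpha>) = x - a then T (take j (take i \<alpha>)) (tl (drop i \<alpha>)) w else 0)
      = (if i < l then f (Suc i) else 0)"
    proof (cases "i < l")
      case False
      then have "drop i \<alpha> = []" unfolding l_def by simp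
      then show ?thesis using False by (simp only: not_True_eq_False simp_thms if_False sum.neutral_const add_0)
    next
      case True
      have hd: "hd (drop i \<alpha>) = \<alpha>!i" "tl (drop i \<alpha>) = drop (Suc i) \<alpha>" "drop i \<alpha> \<noteq> []"
        using True unfolding l_def by (auto simp: hd_drop_conv_nth drop_Suc tl_drop)
      have si: "s (Suc i) = s i + \<alpha>!i" using True unfolding s_def l_def by (simp add: take_Suc_conv_app_nth)
      have pos: "\<alpha>!i > 0" using c True unfolding l_def by (simp add: is_comp_def)
      have li: "length (take i \<alpha>) = i" using il unfolding l_def by simp
      have "(\<Sum>a\<in>{0<..<x}. \<Sum>j<length (take i \<alpha>). if sum_list (drop j (take i \<alpha>)) = a \<and> drop i \<alpha> \<noteq> [] \<and> hd (drop i \<alpha>) = x - a then T (take j (take i \<alpha>)) (tl (drop i \<alpha>)) w else 0)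
          = (\<Sum>j<i. \<Sum>a\<in>{0<..<x}. if a = s i - s j \<and> \<alpha>!i = x - a then T (take j \<alpha>) (drop (Suc i) \<alpha>) w else 0)"
        unfolding li hd s_def using True unfolding l_def by (subst sum.swap) (auto simp: sum_drop_take intro!: sum.cong)
      also have "\<dots> = (\<Sum>j<i. if s (Suc i) - s j = x then T (take j \<alpha>) (drop (Suc i) \<alpha>) w else 0)"
      proof (rule sum.cong[OF refl])
        fix j assume "j \<in> {..<i}"
        then have "s j < s i" using sum_take_mono_strict[OF c] il unfolding s_def l_def by auto
        then have iff: "(s i - s j \<in> {0<..<x} \<and> \<alpha>!i = x - (s i - s j)) \<longleftrightarrow> s (Suc i) - s j = x" using si pos by auto
        show "(\<Sum>a\<in>{0<..<x}. if a = s i - s j \<and> \<alpha>!i = x - a then T (take j \<alpha>) (drop (Suc i) \<alpha>) w else 0)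
          = (if s (Suc i) - s j = x then T (take j \<alpha>) (drop (Suc i) \<alpha>) w else 0)"
          by (subst sum_delta_cond) (simp_all only: iff finite_greaterThanLessThan)
      qed
      finally have t3: "(\<Sum>a\<in>{0<..<x}. \<Sum>j<length (take i \<alpha>). if sum_list (drop j (take i \<alpha>)) = a \<and> drop i \<alpha> \<noteq> [] \<and> hd (drop i \<alpha>) = x - a then T (take j (take i \<alpha>)) (tl (drop i \<alpha>)) w else 0)
          = (\<Sum>j<i. if s (Suc i) - s j = x then T (take j \<alpha>) (drop (Suc i) \<alpha>) w else 0)" .
      have t1: "(if drop i \<alpha> \<noteq> [] \<and> hd (drop i \<alpha>) = x then T (take i \<alpha>) (tl (drop i \<alpha>)) w else 0)
          = (if s (Suc i) - s i = x then T (take i \<alpha>) (drop (Suc i) \<alpha>) w else 0)"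
        using hd si by simp
      have "f (Suc i) = (if s (Suc i) - s i = x then T (take i \<alpha>) (drop (Suc i) \<alpha>) w else 0) + (\<Sum>j<i. if s (Suc i) - s j = x then T (take j \<alpha>) (drop (Suc i) \<alpha>) w else 0)"
        unfolding f_def by (simp add: add.commute)
      then show ?thesis using t1 t3 True by simp
    qed
    note e = T_Cons_pos[OF x, of "take i \<alpha>" "drop i \<alpha>" w, unfolded t2]
    show ?thesis
      using e t13 by linarith
  qed
  have "S \<alpha> (x#w) = (\<Sum>i\<le>l. (-1)^i * (f i + (if i < l then f (Suc i) else 0)))"
    unfolding S_def l_def[symmetric] by (rule sum.cong) (auto simp: key)
  also have "\<dots> = (\<Sum>i\<le>l. (-1)^i * f i) + (\<Sum>i<l. (-1)^i * f (Suc i))"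
    by (simp add: algebra_simps sum.distrib sum_if_less)
  also have "\<dots> = f 0" by (rule alt_tel)
  also have "f 0 = 0" by (simp add: f_def)
  finally show ?thesis .
qed

lemma S_Nil: "\<alpha> \<noteq> [] \<Longrightarrow> S \<alpha> [] = 0"
  unfolding S_def T_Nil by (rule sum.neutral) auto

lemma S_zero: "is_comp \<alpha> \<Longrightarrow> \<alpha> \<noteq> [] \<Longrightarrow> S \<alpha> w = 0"
proof (induction w)
  case Nil then show ?case by (simp add: S_Nil)
next
  case (Cons x w)
  show ?case
  proof (cases "x = 0")
    case True then show ?thesis using Cons by (simp add: S_def T_Cons0)
  next
    case False then show ?thesis using S_pos Cons by simp
  qed
qed

lemma T_NilQ: "T P [] w = rcn (nz w) P"
proof (induction w arbitrary: P)
  case Nil then show ?case by (simp add: T_Nil nz_def)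
next
  case (Cons x w)
  show ?case
  proof (cases "x = 0")
    case True then show ?thesis using Cons by (simp add: T_Cons0)
  next
    case False
    then show ?thesis
      apply (simp add: T_Cons_pos)
      apply (rule sum.cong[OF refl])
      using Cons.IH apply simp
      done
  qed
qed

definition flat :: "(nat \<Rightarrow>\<^sub>0 nat) \<Rightarrow> nat list" where
  "flat e = map (Poly_Mapping.lookup e) (sorted_list_of_set (Poly_Mapping.keys e))"

lemma sorted_list_of_set_sd: "sorted xs \<Longrightarrow> distinct xs \<Longrightarrow> sorted_list_of_set (set xs) = xs"
  by (simp add: sorted_list_of_set.idem_if_sorted_distinct)

lemma flat_via:
  assumes "sorted K" "distinct K" "Poly_Mapping.keys f \<subseteq> set K"
  shows "flat f = nz (map (Poly_Mapping.lookup f) K)"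
proof -
  have "set (filter (\<lambda>k. k \<in> Poly_Mapping.keys f) K) = Poly_Mapping.keys f" using assms by auto
  moreover have "sorted (filter (\<lambda>k. k \<in> Poly_Mapping.keys f) K)" using assms by (simp add: sorted_wrt_filter)
  moreover have "distinct (filter (\<lambda>k. k \<in> Poly_Mapping.keys f) K)" using assms by simp
  ultimately have "sorted_list_of_set (Poly_Mapping.keys f) = filter (\<lambda>k. k \<in> Poly_Mapping.keys f) K"
    by (metis sorted_list_of_set_sd)
  then show ?thesis
    unfolding flat_def nz_def by (simp add: filter_map comp_def in_keys_iff)
qed

lemma set_splits: "set (splits w) = {(u,v). length u = length w \<and> length v = length w \<and> (\<forall>j<length w. u!j + v!j = w!j)}"
proof (induction w)
  case Nil then show ?case by auto
next
  case (Cons x w)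
  show ?case
  proof (intro set_eqI iffI)
    fix p assume "p \<in> set (splits (x#w))"
    then show "p \<in> {(u,v). length u = length (x#w) \<and> length v = length (x#w) \<and> (\<forall>j<length (x#w). u!j + v!j = (x#w)!j)}"
      using Cons by (auto simp: All_less_Suc2)
  next
    fix p assume "p \<in> {(u,v). length u = length (x#w) \<and> length v = length (x#w) \<and> (\<forall>j<length (x#w). u!j + v!j = (x#w)!j)}"
    then obtain u v where p: "p = (u,v)" "length u = Suc (length w)" "length v = Suc (length w)" "\<forall>j<Suc (length w). u!j + v!j = (x#w)!j"
      by auto
    then obtain a u' b v' where uv: "u = a#u'" "v = b#v'" by (metis length_Suc_conv)
    have "a + b = x" using p(4) uv by (metis nth_Cons_0 zero_less_Suc)
    moreover have "(u',v') \<in> set (splits w)" using p uv Cons by (auto simp: All_less_Suc2)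
    ultimately show "p \<in> set (splits (x#w))" using p(1) uv
      by (auto intro!: bexI[of _ "(u', v')"] bexI[of _ a] simp: image_iff)
  qed
qed

lemma splits_ne: "splits w \<noteq> []"
  by (induction w) auto

lemma distinct_splits: "distinct (splits w)"
proof (induction w)
  case Nil then show ?case by simp
next
  case (Cons x w)
  define f where "f = (\<lambda>a. map (\<lambda>(u,v). (a#u, (x-a)#v)) (splits w))"
  have inj: "inj_on f {0..<Suc x}"
  proof (rule inj_onI)
    fix a b assume "f a = f b"
    then have "hd (f a) = hd (f b)" by simp
    then show "a = b" using splits_ne[of w] unfolding f_def by (cases "splits w") auto
  qed
  have "distinct (concat (map f [0..<Suc x]))"
  proof (rule distinct_concat)
    show "distinct (map f [0..<Suc x])" using inj by (simp add: distinct_map del: upt_Suc)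
    show "\<And>ys. ys \<in> set (map f [0..<Suc x]) \<Longrightarrow> distinct ys"
      using Cons unfolding f_def by (auto simp: distinct_map inj_on_def)
    show "\<And>ys zs. ys \<in> set (map f [0..<Suc x]) \<Longrightarrow> zs \<in> set (map f [0..<Suc x]) \<Longrightarrow> ys \<noteq> zs \<Longrightarrow> set ys \<inter> set zs = {}"
      unfolding f_def by (auto simp del: upt_Suc)
  qed
  then show ?case by (simp only: f_def splits.simps)
qed

definition pm :: "nat list \<Rightarrow> nat list \<Rightarrow> (nat \<Rightarrow>\<^sub>0 nat)" where
  "pm K u = (\<Sum>j<length K. Poly_Mapping.single (K!j) (u!j))"

lemma lookup_pm_in: "distinct K \<Longrightarrow> i < length K \<Longrightarrow> Poly_Mapping.lookup (pm K u) (K!i) = u!i"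
proof -
  assume d: "distinct K" and i: "i < length K"
  have "Poly_Mapping.lookup (pm K u) (K!i) = (\<Sum>j<length K. if j = i then u!i else 0)"
    unfolding pm_def lookup_sum lookup_single when_def
    by (rule sum.cong) (use d i in \<open>auto simp: nth_eq_iff_index_eq\<close>)
  also have "\<dots> = u!i" using i by simp
  finally show ?thesis .
qed

lemma lookup_pm_out: "k \<notin> set K \<Longrightarrow> Poly_Mapping.lookup (pm K u) k = 0"
  unfolding pm_def lookup_sum lookup_single when_def
  by (rule sum.neutral) auto

lemma ps_mult_flat:
  "ps_mult (\<lambda>e. F (flat e)) (\<lambda>e. G (flat e)) e = sum_list (map (\<lambda>(u,v). F (nz u) * G (nz v)) (splits (flat e)))"
proof -
  define K where "K = sorted_list_of_set (Poly_Mapping.keys e)"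
  have K: "sorted K" "distinct K" "set K = Poly_Mapping.keys e" by (auto simp: K_def)
  have w: "flat e = map (Poly_Mapping.lookup e) K" by (simp add: flat_def K_def)
  define A where "A = {p::(nat \<Rightarrow>\<^sub>0 nat) \<times> (nat \<Rightarrow>\<^sub>0 nat). fst p + snd p = e}"
  define \<psi> where "\<psi> (p::(nat \<Rightarrow>\<^sub>0 nat) \<times> (nat \<Rightarrow>\<^sub>0 nat)) = (map (Poly_Mapping.lookup (fst p)) K, map (Poly_Mapping.lookup (snd p)) K)" for p
  define h where "h = (\<lambda>(u,v). F (nz u) * G (nz v))"
  have lk: "Poly_Mapping.lookup e k = Poly_Mapping.lookup (fst p) k + Poly_Mapping.lookup (snd p) k" if "p \<in> A" for p k
    using that by (auto simp: A_def lookup_add)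
  have keys_sub: "Poly_Mapping.keys (fst p) \<subseteq> set K" "Poly_Mapping.keys (snd p) \<subseteq> set K" if "p \<in> A" for p
    using lk[OF that] by (auto simp: K(3) in_keys_iff)
  have eq1: "ps_mult (\<lambda>e. F (flat e)) (\<lambda>e. G (flat e)) e = (\<Sum>p\<in>A. h (\<psi> p))"
    unfolding ps_mult_def A_def[symmetric]
    by (rule sum.cong) (auto simp: h_def \<psi>_def flat_via[OF K(1,2)] keys_sub)
  have out0: "Poly_Mapping.lookup (fst p) k = 0" "Poly_Mapping.lookup (snd p) k = 0" if "p \<in> A" "k \<notin> set K" for p k
    using keys_sub[OF that(1)] that(2) by (auto simp: in_keys_iff)
  have inj: "inj_on \<psi> A"
  proof (rule inj_onI)
    fix p q assume pq: "p \<in> A" "q \<in> A" "\<psi> p = \<psi> q"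
    have "Poly_Mapping.lookup (fst p) k = Poly_Mapping.lookup (fst q) k \<and> Poly_Mapping.lookup (snd p) k = Poly_Mapping.lookup (snd q) k" for k
    proof (cases "k \<in> set K")
      case True
      then obtain i where "i < length K" "k = K!i" by (metis in_set_conv_nth)
      then show ?thesis using pq(3) unfolding \<psi>_def by (metis nth_map prod.inject)
    next
      case False then show ?thesis using out0 pq by simp
    qed
    then have "fst p = fst q" "snd p = snd q" by (auto intro: poly_mapping_eqI)
    then show "p = q" by (simp add: prod_eq_iff)
  qed
  have img: "\<psi> ` A = set (splits (flat e))"
  proof (intro set_eqI iffI)
    fix q assume "q \<in> \<psi> ` A"
    then obtain p where p: "p \<in> A" "q = \<psi> p" by auto
    show "q \<in> set (splits (flat e))"
      unfolding set_splits w using p lk by (auto simp: \<psi>_def)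
  next
    fix q assume "q \<in> set (splits (flat e))"
    then obtain u v where q: "q = (u,v)" "length u = length K" "length v = length K" "\<forall>j<length K. u!j + v!j = Poly_Mapping.lookup e (K!j)"
      unfolding set_splits w by auto
    have sum: "pm K u + pm K v = e"
    proof (rule poly_mapping_eqI)
      fix k show "Poly_Mapping.lookup (pm K u + pm K v) k = Poly_Mapping.lookup e k"
      proof (cases "k \<in> set K")
        case True
        then obtain i where "i < length K" "k = K!i" by (metis in_set_conv_nth)
        then show ?thesis using q(4) K(2) by (simp add: lookup_add lookup_pm_in)
      next
        case False then show ?thesis using K(3) by (simp add: lookup_add lookup_pm_out in_keys_iff)
      qed
    qed
    have "\<psi> (pm K u, pm K v) = (u,v)"
      unfolding \<psi>_def using q K(2) by (auto intro!: nth_equalityI simp: lookup_pm_in)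
    moreover have "(pm K u, pm K v) \<in> A" using sum by (simp add: A_def)
    ultimately show "q \<in> \<psi> ` A" using q(1) by force
  qed
  have "(\<Sum>p\<in>A. h (\<psi> p)) = (\<Sum>q\<in>\<psi> ` A. h q)" by (rule sum.reindex[OF inj, symmetric, unfolded comp_def])
  also have "\<dots> = sum_list (map h (splits (flat e)))"
    unfolding img by (rule sum_list_distinct_conv_sum_set[OF distinct_splits, symmetric])
  finally show ?thesis using eq1 by (simp add: h_def)
qed

lemma rcn_Nil2: "rcn x [] = (if x = [] then 1 else 0)"
  by (cases x) auto

lemma foldr_ps_add: "foldr ps_add fs ps_zero e = sum_list (map (\<lambda>f. f e) fs)"
  by (induction fs) (auto simp: ps_add_def ps_zero_def)

lemma nz_flat: "nz (flat e) = flat e"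
  unfolding nz_def flat_def by (auto simp: filter_id_conv in_keys_iff)

lemma flat_Nil_iff: "flat e = [] \<longleftrightarrow> e = 0"
  unfolding flat_def by auto

lemma monoM_flat: "monoM \<beta> = (\<lambda>e. if flat e = \<beta> then 1 else 0)"
  by (simp add: monoM_def flat_def fun_eq_iff)

lemma antipode_formula:
  "is_comp \<alpha> \<Longrightarrow> antipodeM \<alpha> = (\<lambda>e. (-1)^length \<alpha> * rcn (flat e) \<alpha>)"
proof (induction \<alpha> rule: measure_induct_rule[of length])
  case (less \<alpha>)
  show ?case
  proof (cases "\<alpha> = []")
    case True
    then show ?thesis by (auto simp: fun_eq_iff ps_one_def flat_Nil_iff rcn_Nil2)
  next
    case False
    show ?thesis
    proof
      fix e
      have IH: "antipodeM (take i \<alpha>) = (\<lambda>e. (-1)^i * rcn (flat e) (take i \<alpha>))" if "i < length \<alpha>" for i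
        using less.IH[of "take i \<alpha>"] that less.prems is_comp_take by (simp add: min_absorb2)
      have mult: "ps_mult (antipodeM (take i \<alpha>)) (monoM (drop i \<alpha>)) e = (-1)^i * T (take i \<alpha>) (drop i \<alpha>) (flat e)"
        if "i < length \<alpha>" for i
      proof -
        have "ps_mult (antipodeM (take i \<alpha>)) (monoM (drop i \<alpha>)) e
          = ps_mult (\<lambda>e. (\<lambda>x. (-1)^i * rcn x (take i \<alpha>)) (flat e)) (\<lambda>e. (\<lambda>x. if x = drop i \<alpha> then 1 else 0) (flat e)) e"
          using IH[OF that] by (simp add: monoM_flat)
        also have "\<dots> = (-1)^i * T (take i \<alpha>) (drop i \<alpha>) (flat e)"
          using ps_mult_flat[of "\<lambda>x. (-1)^i * rcn x (take i \<alpha>)" "\<lambda>x. if x = drop i \<alpha> then 1 else 0" e]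
          unfolding T_def by (simp add: case_prod_unfold sum_list_cmult mult.assoc)
        finally show ?thesis .
      qed
      have "antipodeM \<alpha> e = - (\<Sum>i<length \<alpha>. ps_mult (antipodeM (take i \<alpha>)) (monoM (drop i \<alpha>)) e)"
        using False by (simp add: ps_neg_def foldr_ps_add comp_def interv_sum_list_conv_sum_set_nat atLeast0LessThan del: upt_Suc)
      also have "\<dots> = - (\<Sum>i<length \<alpha>. (-1)^i * T (take i \<alpha>) (drop i \<alpha>) (flat e))"
        using mult by simp
      also have "\<dots> = (-1)^length \<alpha> * T \<alpha> [] (flat e)"
      proof -
        have "S \<alpha> (flat e) = 0" using S_zero less.prems False by simp
        then show ?thesis unfolding S_def by (simp add: lessThan_Suc_atMost[symmetric])
      qed
      also have "\<dots> = (-1)^length \<alpha> * rcn (flat e) \<alpha>" by (simp add: T_NilQ nz_flat)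
      finally show "antipodeM \<alpha> e = (-1)^length \<alpha> * rcn (flat e) \<alpha>" .
    qed
  qed
qed



definition decomps :: "nat list \<Rightarrow> nat list list set" where
  "decomps \<alpha> = {Bs. concat Bs = \<alpha> \<and> (\<forall>B\<in>set Bs. B \<noteq> [])}"

lemma length_le_concat: "\<forall>B\<in>set Bs. B \<noteq> [] \<Longrightarrow> length Bs \<le> length (concat Bs)"
proof (induction Bs)
  case (Cons a Bs)
  then have "length a > 0" "length Bs \<le> length (concat Bs)" by auto
  then show ?case by (simp del: length_greater_0_conv)
qed simp

lemma finite_decomps: "finite (decomps \<alpha>)"
proof -
  let ?A = "{B. set B \<subseteq> set \<alpha> \<and> length B \<le> length \<alpha>}"
  have fA: "finite ?A" by (rule finite_lists_length_le) simp
  have "decomps \<alpha> \<subseteq> {Bs. set Bs \<subseteq> ?A \<and> length Bs \<le> length \<alpha>}"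
  proof
    fix Bs assume "Bs \<in> decomps \<alpha>"
    then have h: "concat Bs = \<alpha>" "\<forall>B\<in>set Bs. B \<noteq> []" by (auto simp: decomps_def)
    have "set Bs \<subseteq> ?A"
    proof
      fix B assume "B \<in> set Bs"
      then have "set B \<subseteq> set \<alpha>" "length B \<le> length \<alpha>" using h(1)
        by (auto simp: length_concat member_le_sum_list)
      then show "B \<in> ?A" by simp
    qed
    moreover have "length Bs \<le> length \<alpha>" using length_le_concat[OF h(2)] h(1) by simp
    ultimately show "Bs \<in> {Bs. set Bs \<subseteq> ?A \<and> length Bs \<le> length \<alpha>}" by simp
  qed
  moreover have "finite {Bs. set Bs \<subseteq> ?A \<and> length Bs \<le> length \<alpha>}"
    by (rule finite_lists_length_le[OF fA])
  ultimately show ?thesis by (rule finite_subset)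
qed

lemma decomp_split:
  "(\<Sum>Bs\<in>decomps \<alpha>. \<Sum>j\<le>length Bs. g (take j Bs) (drop j Bs))
   = (\<Sum>k\<le>length \<alpha>. \<Sum>X\<in>decomps (take k \<alpha>). \<Sum>Y\<in>decomps (drop k \<alpha>). (g X Y :: rat))"
proof -
  have L: "(\<Sum>Bs\<in>decomps \<alpha>. \<Sum>j\<le>length Bs. g (take j Bs) (drop j Bs))
     = (\<Sum>(Bs,j)\<in>Sigma (decomps \<alpha>) (\<lambda>Bs. {..length Bs}). g (take j Bs) (drop j Bs))"
    by (rule sum.Sigma) (auto simp: finite_decomps)
  have R: "(\<Sum>k\<le>length \<alpha>. \<Sum>X\<in>decomps (take k \<alpha>). \<Sum>Y\<in>decomps (drop k \<alpha>). g X Y)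
     = (\<Sum>(k,XY)\<in>Sigma {..length \<alpha>} (\<lambda>k. decomps (take k \<alpha>) \<times> decomps (drop k \<alpha>)). g (fst XY) (snd XY))"
  proof -
    have "(\<Sum>k\<le>length \<alpha>. \<Sum>X\<in>decomps (take k \<alpha>). \<Sum>Y\<in>decomps (drop k \<alpha>). g X Y)
      = (\<Sum>k\<le>length \<alpha>. \<Sum>XY\<in>decomps (take k \<alpha>) \<times> decomps (drop k \<alpha>). g (fst XY) (snd XY))"
      by (simp add: sum.cartesian_product case_prod_unfold)
    also have "\<dots> = (\<Sum>(k,XY)\<in>Sigma {..length \<alpha>} (\<lambda>k. decomps (take k \<alpha>) \<times> decomps (drop k \<alpha>)). g (fst XY) (snd XY))"
      by (subst sum.Sigma) (auto simp: finite_decomps)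
    finally show ?thesis .
  qed
  have "(\<Sum>(Bs,j)\<in>Sigma (decomps \<alpha>) (\<lambda>Bs. {..length Bs}). g (take j Bs) (drop j Bs))
      = (\<Sum>(k,XY)\<in>Sigma {..length \<alpha>} (\<lambda>k. decomps (take k \<alpha>) \<times> decomps (drop k \<alpha>)). g (fst XY) (snd XY))"
  proof (rule sum.reindex_bij_witness[where i = "\<lambda>(k,XY). (fst XY @ snd XY, length (fst XY))"
        and j = "\<lambda>(Bs,n). (length (concat (take n Bs)), (take n Bs, drop n Bs))"])
    fix a assume a: "a \<in> Sigma (decomps \<alpha>) (\<lambda>Bs. {..length Bs})"
    obtain Bs n where an: "a = (Bs, n)" by (cases a)
    have c: "concat Bs = \<alpha>" "\<forall>B\<in>set Bs. B \<noteq> []" "n \<le> length Bs" using a an by (auto simp: decomps_def)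
    have ca: "concat (take n Bs) @ concat (drop n Bs) = \<alpha>" using c by (metis append_take_drop_id concat_append)
    show "(case case a of (Bs, n) \<Rightarrow> (length (concat (take n Bs)), take n Bs, drop n Bs) of
          (k, XY) \<Rightarrow> (fst XY @ snd XY, length (fst XY))) = a"
      using an c by simp
    show "(case a of (Bs, n) \<Rightarrow> (length (concat (take n Bs)), take n Bs, drop n Bs))
        \<in> Sigma {..length \<alpha>} (\<lambda>k. decomps (take k \<alpha>) \<times> decomps (drop k \<alpha>))"
    proof -
      have k: "length (concat (take n Bs)) \<le> length \<alpha>" using ca by (metis le_add1 length_append)
      have t: "take (length (concat (take n Bs))) \<alpha> = concat (take n Bs)" using ca by (metis append_eq_conv_conj)
      have d: "drop (length (concat (take n Bs))) \<alpha> = concat (drop n Bs)" using ca by (metis append_eq_conv_conj)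
      show ?thesis using an c k t d by (auto simp: decomps_def dest: in_set_takeD in_set_dropD)
    qed
    show "(case case a of (Bs, n) \<Rightarrow> (length (concat (take n Bs)), take n Bs, drop n Bs) of
          (k, XY) \<Rightarrow> g (fst XY) (snd XY)) = (case a of (Bs, j) \<Rightarrow> g (take j Bs) (drop j Bs))"
      using an by simp
  next
    fix b assume b: "b \<in> Sigma {..length \<alpha>} (\<lambda>k. decomps (take k \<alpha>) \<times> decomps (drop k \<alpha>))"
    obtain k X Y where bk: "b = (k, (X, Y))" by (cases b) auto
    have c: "k \<le> length \<alpha>" "concat X = take k \<alpha>" "concat Y = drop k \<alpha>" "\<forall>B\<in>set X. B \<noteq> []" "\<forall>B\<in>set Y. B \<noteq> []"
      using b bk by (auto simp: decomps_def)
    show "(case case b of (k, XY) \<Rightarrow> (fst XY @ snd XY, length (fst XY)) of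
          (Bs, n) \<Rightarrow> (length (concat (take n Bs)), take n Bs, drop n Bs)) = b"
      using bk c by (simp add: min_absorb2)
    show "(case b of (k, XY) \<Rightarrow> (fst XY @ snd XY, length (fst XY))) \<in> Sigma (decomps \<alpha>) (\<lambda>Bs. {..length Bs})"
      using bk c by (auto simp: decomps_def)
  qed
  then show ?thesis using L R by simp
qed

definition Gf :: "(nat list \<Rightarrow> rat) \<Rightarrow> nat list \<Rightarrow> rat" where
  "Gf h A = (\<Sum>Bs\<in>decomps A. prod_list (map h Bs))"

lemma sum_list_concat_nat: "sum_list (concat Bs) = sum_list (map sum_list (Bs::nat list list))"
  by (induction Bs) auto

lemma Nil_in_decomps: "[] \<in> decomps \<alpha> \<longleftrightarrow> \<alpha> = []"
  by (auto simp: decomps_def)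

lemma decomps_Nil: "decomps [] = {[]}"
  by (auto simp: decomps_def)

lemma sum_decomps_single:
  "(\<Sum>Y\<in>decomps D. if length Y = 1 then f Y else 0) = (if D \<noteq> [] then f [D] else (0::rat))"
proof -
  have "(\<Sum>Y\<in>decomps D. if length Y = 1 then f Y else 0) = (\<Sum>Y\<in>decomps D. if Y = [D] then f [D] else 0)"
  proof (rule sum.cong[OF refl])
    fix Y assume "Y \<in> decomps D"
    then have "length Y = 1 \<longleftrightarrow> Y = [D]" by (auto simp: decomps_def length_Suc_conv)
    then show "(if length Y = 1 then f Y else 0) = (if Y = [D] then f [D] else 0)" by auto
  qed
  also have "\<dots> = (if [D] \<in> decomps D then f [D] else 0)" by (simp add: sum.delta' finite_decomps)
  also have "\<dots> = (if D \<noteq> [] then f [D] else 0)" by (auto simp: decomps_def)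
  finally show ?thesis .
qed

lemma factor:
  "(\<Sum>Bs\<in>decomps \<alpha>. prod_list (map h Bs) * rcn \<gamma> (map sum_list Bs))
   = (\<Sum>As\<in>decomps \<alpha>. (if rev (map sum_list As) = \<gamma> then 1 else 0) * prod_list (map (Gf h) As))"
proof (induction \<gamma> arbitrary: \<alpha>)
  case Nil
  have "(\<Sum>Bs\<in>decomps \<alpha>. prod_list (map h Bs) * rcn [] (map sum_list Bs)) = (\<Sum>Bs\<in>decomps \<alpha>. if Bs = [] then 1 else 0)"
    by (rule sum.cong) auto
  moreover have "(\<Sum>As\<in>decomps \<alpha>. (if rev (map sum_list As) = [] then 1 else 0) * prod_list (map (Gf h) As)) = (\<Sum>Bs\<in>decomps \<alpha>. if Bs = [] then 1 else 0)"
    by (rule sum.cong) auto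
  ultimately show ?case by simp
next
  case (Cons y \<gamma>)
  define g where "g X Y = (if Y \<noteq> [] \<and> sum_list (concat Y) = y then rcn \<gamma> (map sum_list X) * (prod_list (map h X) * prod_list (map h Y)) else 0)" for X Y
  define g' where "g' X Y = (if length Y = 1 \<and> sum_list (concat Y) = y \<and> rev (map sum_list X) = \<gamma> then prod_list (map (Gf h) X) * prod_list (map (Gf h) Y) else 0)" for X Y
  define common where "common = (\<Sum>k\<le>length \<alpha>. if k < length \<alpha> \<and> sum_list (drop k \<alpha>) = y then
      (\<Sum>X\<in>decomps (take k \<alpha>). (if rev (map sum_list X) = \<gamma> then 1 else 0) * prod_list (map (Gf h) X)) * Gf h (drop k \<alpha>) else 0)"
  have L1: "prod_list (map h Bs) * rcn (y#\<gamma>) (map sum_list Bs) = (\<Sum>j\<le>length Bs. g (take j Bs) (drop j Bs))" for Bs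
  proof -
    have "(\<Sum>j\<le>length Bs. g (take j Bs) (drop j Bs)) = (\<Sum>j<length Bs. g (take j Bs) (drop j Bs))"
      by (rule sum.mono_neutral_right) (auto simp: g_def)
    also have "\<dots> = (\<Sum>j<length Bs. prod_list (map h Bs) * (if sum_list (drop j (map sum_list Bs)) = y then rcn \<gamma> (take j (map sum_list Bs)) else 0))"
    proof (rule sum.cong[OF refl])
      fix j assume "j \<in> {..<length Bs}"
      then have "drop j Bs \<noteq> []" by simp
      moreover have "prod_list (map h Bs) = prod_list (map h (take j Bs)) * prod_list (map h (drop j Bs))"
        by (metis append_take_drop_id map_append prod_list.append)
      ultimately show "g (take j Bs) (drop j Bs) = prod_list (map h Bs) * (if sum_list (drop j (map sum_list Bs)) = y then rcn \<gamma> (take j (map sum_list Bs)) else 0)"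
        by (simp add: g_def sum_list_concat_nat drop_map take_map)
    qed
    also have "\<dots> = prod_list (map h Bs) * rcn (y#\<gamma>) (map sum_list Bs)"
      by (simp add: sum_distrib_left)
    finally show ?thesis by simp
  qed
  have "(\<Sum>Bs\<in>decomps \<alpha>. prod_list (map h Bs) * rcn (y#\<gamma>) (map sum_list Bs))
      = (\<Sum>k\<le>length \<alpha>. \<Sum>X\<in>decomps (take k \<alpha>). \<Sum>Y\<in>decomps (drop k \<alpha>). g X Y)"
    unfolding L1 by (rule decomp_split)
  also have "\<dots> = common"
    unfolding common_def
  proof (rule sum.cong[OF refl])
    fix k assume "k \<in> {..length \<alpha>}"
    have gY: "g X Y = (if k < length \<alpha> \<and> sum_list (drop k \<alpha>) = y then (prod_list (map h X) * rcn \<gamma> (map sum_list X)) * prod_list (map h Y) else 0)"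
      if "Y \<in> decomps (drop k \<alpha>)" for X Y
      using that by (auto simp: g_def decomps_def)
    show "(\<Sum>X\<in>decomps (take k \<alpha>). \<Sum>Y\<in>decomps (drop k \<alpha>). g X Y) = (if k < length \<alpha> \<and> sum_list (drop k \<alpha>) = y then
      (\<Sum>X\<in>decomps (take k \<alpha>). (if rev (map sum_list X) = \<gamma> then 1 else 0) * prod_list (map (Gf h) X)) * Gf h (drop k \<alpha>) else 0)"
    proof (cases "k < length \<alpha> \<and> sum_list (drop k \<alpha>) = y")
      case True
      have "(\<Sum>X\<in>decomps (take k \<alpha>). \<Sum>Y\<in>decomps (drop k \<alpha>). g X Y)
          = (\<Sum>X\<in>decomps (take k \<alpha>). (prod_list (map h X) * rcn \<gamma> (map sum_list X)) * Gf h (drop k \<alpha>))"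
        by (rule sum.cong[OF refl]) (simp add: gY True Gf_def sum_distrib_left)
      also have "\<dots> = (\<Sum>X\<in>decomps (take k \<alpha>). prod_list (map h X) * rcn \<gamma> (map sum_list X)) * Gf h (drop k \<alpha>)"
        by (simp add: sum_distrib_right)
      also have "\<dots> = (\<Sum>X\<in>decomps (take k \<alpha>). (if rev (map sum_list X) = \<gamma> then 1 else 0) * prod_list (map (Gf h) X)) * Gf h (drop k \<alpha>)"
        by (simp only: Cons.IH)
      finally show ?thesis using True by simp
    next
      case False
      have "g X Y = 0" if "Y \<in> decomps (drop k \<alpha>)" for X Y using gY[OF that] False by simp
      then have "(\<Sum>X\<in>decomps (take k \<alpha>). \<Sum>Y\<in>decomps (drop k \<alpha>). g X Y) = 0" by simp
      then show ?thesis using False by (simp only: if_False)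
    qed
  qed
  finally have LHS: "(\<Sum>Bs\<in>decomps \<alpha>. prod_list (map h Bs) * rcn (y#\<gamma>) (map sum_list Bs)) = common" .
  have R1: "(if rev (map sum_list As) = y#\<gamma> then 1 else 0) * prod_list (map (Gf h) As) = (\<Sum>j\<le>length As. g' (take j As) (drop j As))" for As
  proof (cases As rule: rev_exhaust)
    case Nil then show ?thesis by (simp add: g'_def)
  next
    case (snoc As' A)
    have "(\<Sum>j\<le>length As. g' (take j As) (drop j As)) = (\<Sum>j\<le>length As. if j = length As' then g' As' [A] else 0)"
    proof (rule sum.cong[OF refl])
      fix j assume "j \<in> {..length As}"
      then have "j \<le> Suc (length As')" using snoc by simp
      then consider "j \<le> length As' - 1 \<and> j < length As'" | "j = length As'" | "j = Suc (length As')" by linarith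
      then show "g' (take j As) (drop j As) = (if j = length As' then g' As' [A] else 0)"
        by cases (auto simp: g'_def snoc)
    qed
    also have "\<dots> = g' As' [A]" using snoc by simp
    also have "\<dots> = (if rev (map sum_list As) = y#\<gamma> then 1 else 0) * prod_list (map (Gf h) As)"
      by (auto simp: g'_def snoc)
    finally show ?thesis by simp
  qed
  have "(\<Sum>As\<in>decomps \<alpha>. (if rev (map sum_list As) = y#\<gamma> then 1 else 0) * prod_list (map (Gf h) As))
      = (\<Sum>k\<le>length \<alpha>. \<Sum>X\<in>decomps (take k \<alpha>). \<Sum>Y\<in>decomps (drop k \<alpha>). g' X Y)"
    unfolding R1 by (rule decomp_split)
  also have "\<dots> = common"
    unfolding common_def
  proof (rule sum.cong[OF refl])
    fix k assume "k \<in> {..length \<alpha>}"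
    have "(\<Sum>Y\<in>decomps (drop k \<alpha>). g' X Y) = (if k < length \<alpha> \<and> sum_list (drop k \<alpha>) = y then (if rev (map sum_list X) = \<gamma> then 1 else 0) * prod_list (map (Gf h) X) * Gf h (drop k \<alpha>) else 0)" for X
    proof -
      have "(\<Sum>Y\<in>decomps (drop k \<alpha>). g' X Y) = (\<Sum>Y\<in>decomps (drop k \<alpha>). if length Y = 1 then (if sum_list (concat Y) = y \<and> rev (map sum_list X) = \<gamma> then prod_list (map (Gf h) X) * prod_list (map (Gf h) Y) else 0) else 0)"
        by (rule sum.cong) (auto simp: g'_def)
      also have "\<dots> = (if drop k \<alpha> \<noteq> [] then (if sum_list (drop k \<alpha>) = y \<and> rev (map sum_list X) = \<gamma> then prod_list (map (Gf h) X) * Gf h (drop k \<alpha>) else 0) else 0)"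
        by (subst sum_decomps_single) simp
      finally show ?thesis by auto
    qed
    then show "(\<Sum>X\<in>decomps (take k \<alpha>). \<Sum>Y\<in>decomps (drop k \<alpha>). g' X Y) = (if k < length \<alpha> \<and> sum_list (drop k \<alpha>) = y then
      (\<Sum>X\<in>decomps (take k \<alpha>). (if rev (map sum_list X) = \<gamma> then 1 else 0) * prod_list (map (Gf h) X)) * Gf h (drop k \<alpha>) else 0)"
      apply (cases "k < length \<alpha> \<and> sum_list (drop k \<alpha>) = y")
       apply (simp add: sum_distrib_right)
      apply (simp only: if_not_P if_False sum.neutral_const)
      done
  qed
  finally show ?case using LHS by simp
qed



definition Wb :: "bool list \<Rightarrow> rat" where
  "Wb P = 1 / (of_nat (fact (length (filter id P))) * of_nat (fact (length (filter Not P))))"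

lemma alt_binom:
  assumes "t > 0"
  shows "(\<Sum>q\<le>t. (-1)^q / (fact q * fact (t-q)) :: rat) = 0"
proof -
  have "(\<Sum>q\<le>t. (-1)^q / (fact q * fact (t-q)) :: rat) = (\<Sum>q\<le>t. (-1)^q * of_nat (t choose q)) / fact t"
    by (simp add: sum_divide_distrib binomial_fact)
  also have "\<dots> = 0" using choose_alternating_sum[OF assms] by simp
  finally show ?thesis .
qed

lemma Wb_rep: "Wb (replicate a False @ replicate b True) = 1 / (fact b * fact a)"
  by (simp add: Wb_def)
lemma Wb_rep2: "Wb (replicate b True @ replicate a False) = 1 / (fact b * fact a)"
  by (simp add: Wb_def)

lemma Zrep:
  assumes n: "a + t + d > 0" and P: "P = replicate a False @ replicate t True @ replicate d False"
  shows "(\<Sum>k\<le>length P. (-1)^k * (if sorted (take k P) \<and> sorted (rev (drop k P)) then Wb (take k P) * Wb (drop k P) else 0)) = 0"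
proof (cases "t = 0")
  case True
  define m where "m = a + d"
  have Pm: "P = replicate m False" using True P by (simp add: m_def replicate_add)
  have "(\<Sum>k\<le>length P. (-1)^k * (if sorted (take k P) \<and> sorted (rev (drop k P)) then Wb (take k P) * Wb (drop k P) else 0))
     = (\<Sum>k\<le>m. (-1)^k / (fact k * fact (m - k)))"
  proof (rule sum.cong)
    fix k assume "k \<in> {..m}"
    then have "take k P = replicate k False @ replicate 0 True" "drop k P = replicate 0 True @ replicate (m - k) False"
      using Pm by (auto simp: min_absorb1)
    then show "(-1)^k * (if sorted (take k P) \<and> sorted (rev (drop k P)) then Wb (take k P) * Wb (drop k P) else 0) = (-1)^k / (fact k * fact (m - k))"
      by (simp only: Wb_rep Wb_rep2) (simp add: Pm)
  qed (simp add: Pm)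
  also have "\<dots> = 0" using alt_binom[of m] n True by (simp add: m_def)
  finally show ?thesis .
next
  case False
  define n where "n = a + t + d"
  have lenP: "length P = n" using P by (simp add: n_def)
  have tm: "(-1)^k * (if sorted (take k P) \<and> sorted (rev (drop k P)) then Wb (take k P) * Wb (drop k P) else 0)
      = (if a \<le> k \<and> k \<le> a + t then (-1)^k / (fact a * fact d * fact (k - a) * fact (a + t - k)) else 0)"
    if "k \<le> n" for k
  proof -
    consider "k < a" | "a \<le> k \<and> k \<le> a + t" | "a + t < k" by linarith
    then show ?thesis
    proof cases
      case 1
      have "drop k P = replicate (a - k) False @ replicate t True @ replicate d False" using 1 P by simp
      then have "\<not> sorted (rev (drop k P))" using 1 False by (auto simp: sorted_append)
      then show ?thesis using 1 by simp
    next
      case 2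
      have "take k P = replicate a False @ replicate (k - a) True" using 2 P by (auto simp: min_def)
      moreover have "drop k P = replicate (a + t - k) True @ replicate d False" using 2 P by simp
      ultimately show ?thesis using 2 by (simp add: Wb_rep Wb_rep2 sorted_append field_simps)
    next
      case 3
      have "take k P = replicate a False @ replicate t True @ replicate (min d (k - a - t)) False"
        using 3 P by (simp add: min_absorb1 min_absorb2)
      then have "\<not> sorted (take k P)" using 3 False that unfolding n_def by (auto simp: sorted_append)
      then show ?thesis using 3 by simp
    qed
  qed
  have "(\<Sum>k\<le>length P. (-1)^k * (if sorted (take k P) \<and> sorted (rev (drop k P)) then Wb (take k P) * Wb (drop k P) else 0))
     = (\<Sum>k\<le>n. if a \<le> k \<and> k \<le> a + t then (-1)^k / (fact a * fact d * fact (k - a) * fact (a + t - k)) else 0)"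
    unfolding lenP by (rule sum.cong) (auto simp: tm)
  also have "\<dots> = (\<Sum>k\<in>{a..a+t}. (-1)^k / (fact a * fact d * fact (k - a) * fact (a + t - k)))"
    by (rule sum.mono_neutral_cong_right) (auto simp: n_def)
  also have "\<dots> = (\<Sum>q\<in>{0..t}. (-1)^(q+a) / (fact a * fact d * fact q * fact (t - q)))"
    using sum.shift_bounds_cl_nat_ivl[of "\<lambda>k. (-1)^k / (fact a * fact d * fact (k - a) * fact (a + t - k)) :: rat" 0 a t]
    by (simp add: add.commute)
  also have "\<dots> = ((-1)^a / (fact a * fact d)) * (\<Sum>q\<le>t. (-1)^q / (fact q * fact (t - q)))"
    by (simp add: sum_distrib_left atLeast0AtMost power_add field_simps)
  also have "\<dots> = 0" using alt_binom[of t] False by simp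
  finally show ?thesis .
qed

lemma sorted_boolE: "sorted (P::bool list) \<Longrightarrow> \<exists>a b. P = replicate a False @ replicate b True"
proof (induction P)
  case Nil
  have "[] = replicate 0 False @ replicate 0 True" by simp
  then show ?case by blast
next
  case (Cons x P)
  then obtain a b where ab: "P = replicate a False @ replicate b True" by auto
  show ?case
  proof (cases x)
    case False
    then have "x # P = replicate (Suc a) False @ replicate b True" using ab by simp
    then show ?thesis by blast
  next
    case True
    then have "\<forall>y\<in>set P. y" using Cons.prems by auto
    then have "a = 0" using ab by (cases a) auto
    then have "x # P = replicate 0 False @ replicate (Suc b) True" using ab True by simp
    then show ?thesis by blast
  qed
qed

lemma Zbool:
  assumes "P \<noteq> []"
  shows "(\<Sum>k\<le>length P. (-1)^k * (if sorted (take k P) \<and> sorted (rev (drop k P)) then Wb (take k P) * Wb (drop k P) else 0)) = 0"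
proof (cases "\<exists>k. sorted (take k P) \<and> sorted (rev (drop k P))")
  case False
  then show ?thesis by (auto intro!: sum.neutral)
next
  case True
  then obtain k where k: "sorted (take k P)" "sorted (rev (drop k P))" by blast
  obtain a b where ab: "take k P = replicate a False @ replicate b True" using sorted_boolE[OF k(1)] by blast
  obtain d c where dc: "rev (drop k P) = replicate d False @ replicate c True" using sorted_boolE[OF k(2)] by blast
  have dr: "drop k P = replicate c True @ replicate d False"
  proof -
    have "drop k P = rev (rev (drop k P))" by simp
    also have "\<dots> = rev (replicate d False @ replicate c True)" by (simp only: dc)
    also have "\<dots> = replicate c True @ replicate d False" by simp
    finally show ?thesis .
  qed
  have "P = take k P @ drop k P" by simp
  also have "\<dots> = replicate a False @ (replicate b True @ replicate c True) @ replicate d False" using ab dr by simp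
  finally have P: "P = replicate a False @ replicate (b + c) True @ replicate d False" by (simp add: replicate_add)
  have "length P > 0" using assms by simp
  then have pos: "a + (b + c) + d > 0" by (simp add: P)
  show ?thesis by (rule Zrep[OF pos P])
qed

lemma OtE_empty_iff: "OtE X = {} \<longleftrightarrow> sorted (map odd X)"
proof -
  have "OtE X = {} \<longleftrightarrow> (\<forall>i. Suc i < length X \<longrightarrow> \<not> (odd (X!i) \<and> even (X!Suc i)))"
  proof
    assume h: "OtE X = {}"
    show "\<forall>i. Suc i < length X \<longrightarrow> \<not> (odd (X!i) \<and> even (X!Suc i))"
    proof (intro allI impI notI)
      fix i assume "Suc i < length X" "odd (X!i) \<and> even (X!Suc i)"
      then have "Suc i \<in> OtE X" by (simp add: OtE_def)
      then show False using h by simp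
    qed
  next
    assume h: "\<forall>i. Suc i < length X \<longrightarrow> \<not> (odd (X!i) \<and> even (X!Suc i))"
    show "OtE X = {}"
    proof (rule ccontr)
      assume "OtE X \<noteq> {}"
      then obtain i where i: "1 \<le> i" "i < length X" "odd (X!(i-1))" "even (X!i)" by (auto simp: OtE_def)
      then obtain j where "i = Suc j" by (cases i) auto
      then show False using h i by auto
    qed
  qed
  also have "\<dots> \<longleftrightarrow> sorted (map odd X)"
    unfolding sorted_iff_nth_Suc by (auto simp: le_bool_def)
  finally show ?thesis .
qed

definition W :: "nat list \<Rightarrow> rat" where
  "W B = 1 / (of_nat (fact (length (filter odd B))) * of_nat (fact (length (filter even B))))"

lemma W_Wb: "W X = Wb (map odd X)"
  by (simp add: W_def Wb_def filter_map comp_def)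

lemma Znat:
  assumes "A \<noteq> []"
  shows "(\<Sum>k\<le>length A. (-1)^k * (if OtE (take k A) = {} \<and> OtE (rev (drop k A)) = {} then W (take k A) * W (drop k A) else 0)) = 0"
proof -
  have "(\<Sum>k\<le>length A. (-1)^k * (if OtE (take k A) = {} \<and> OtE (rev (drop k A)) = {} then W (take k A) * W (drop k A) else 0))
    = (\<Sum>k\<le>length (map odd A). (-1)^k * (if sorted (take k (map odd A)) \<and> sorted (rev (drop k (map odd A))) then Wb (take k (map odd A)) * Wb (drop k (map odd A)) else 0))"
    by (simp only: OtE_empty_iff W_Wb take_map drop_map rev_map length_map)
  also have "\<dots> = 0" using Zbool[of "map odd A"] assms by simp
  finally show ?thesis .
qed



definition h0 :: "nat list \<Rightarrow> rat" where
  "h0 B = - (if OtE B = {} then W B else 0)"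

definition Fb :: "nat list \<Rightarrow> rat" where
  "Fb A = (-1)^length A * (if OtE (rev A) = {} then W A else 0)"

lemma first_block:
  assumes "A \<noteq> []"
  shows "Gf h A = (\<Sum>k\<le>length A. if k \<noteq> 0 then h (take k A) * Gf h (drop k A) else 0)"
proof -
  define g where "g X Y = (if length X = 1 then prod_list (map h X) * prod_list (map h Y) else 0)" for X Y
  have L: "(\<Sum>j\<le>length Bs. g (take j Bs) (drop j Bs)) = prod_list (map h Bs)" if "Bs \<in> decomps A" for Bs
  proof -
    have ne: "Bs \<noteq> []" using that assms by (auto simp: decomps_def)
    have "(\<Sum>j\<le>length Bs. g (take j Bs) (drop j Bs)) = (\<Sum>j\<le>length Bs. if j = 1 then prod_list (map h Bs) else 0)"
    proof (rule sum.cong[OF refl])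
      fix j assume "j \<in> {..length Bs}"
      then have "length (take j Bs) = j" by simp
      moreover have "prod_list (map h (take j Bs)) * prod_list (map h (drop j Bs)) = prod_list (map h Bs)"
        by (metis append_take_drop_id map_append prod_list.append)
      ultimately show "g (take j Bs) (drop j Bs) = (if j = 1 then prod_list (map h Bs) else 0)"
        by (auto simp: g_def)
    qed
    also have "\<dots> = prod_list (map h Bs)" using ne by (simp add: Suc_le_eq)
    finally show ?thesis .
  qed
  have "Gf h A = (\<Sum>Bs\<in>decomps A. \<Sum>j\<le>length Bs. g (take j Bs) (drop j Bs))"
    unfolding Gf_def by (rule sum.cong[OF refl]) (simp add: L)
  also have "\<dots> = (\<Sum>k\<le>length A. \<Sum>X\<in>decomps (take k A). \<Sum>Y\<in>decomps (drop k A). g X Y)"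
    by (rule decomp_split)
  also have "\<dots> = (\<Sum>k\<le>length A. if k \<noteq> 0 then h (take k A) * Gf h (drop k A) else 0)"
  proof (rule sum.cong[OF refl])
    fix k assume "k \<in> {..length A}"
    have "(\<Sum>X\<in>decomps (take k A). \<Sum>Y\<in>decomps (drop k A). g X Y)
        = (\<Sum>X\<in>decomps (take k A). if length X = 1 then prod_list (map h X) * Gf h (drop k A) else 0)"
      by (rule sum.cong[OF refl]) (simp add: g_def Gf_def sum_distrib_left)
    also have "\<dots> = (if take k A \<noteq> [] then h (take k A) * Gf h (drop k A) else 0)"
      by (subst sum_decomps_single) simp
    also have "\<dots> = (if k \<noteq> 0 then h (take k A) * Gf h (drop k A) else 0)"
      using assms by simp
    finally show "(\<Sum>X\<in>decomps (take k A). \<Sum>Y\<in>decomps (drop k A). g X Y) = (if k \<noteq> 0 then h (take k A) * Gf h (drop k A) else 0)" .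
  qed
  finally show ?thesis .
qed

lemma neg1_pow_diff: "k \<le> n \<Longrightarrow> (-1::rat)^(n-k) = (-1)^n * (-1)^k"
proof -
  assume "k \<le> n"
  then have "(-1::rat)^n = (-1)^(n-k) * (-1)^k" by (simp flip: power_add)
  moreover have "(-1::rat)^k * (-1)^k = 1" by (simp flip: power_add)
  ultimately show ?thesis by (metis mult.assoc mult.right_neutral)
qed

lemma OtE_Nil: "OtE [] = {}" by (simp add: OtE_def)
lemma W_Nil: "W [] = 1" by (simp add: W_def)

lemma single_block: "Gf h0 A = Fb A"
proof (induction A rule: measure_induct_rule[of length])
  case (less A)
  show ?case
  proof (cases "A = []")
    case True
    then show ?thesis by (simp add: Gf_def decomps_Nil Fb_def OtE_Nil W_Nil)
  next
    case False
    define n where "n = length A"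
    define V where "V k = (if OtE (take k A) = {} \<and> OtE (rev (drop k A)) = {} then W (take k A) * W (drop k A) else 0)" for k
    have Z: "(\<Sum>k\<le>n. (-1)^k * V k) = 0" using Znat[OF False] unfolding V_def n_def .
    have V0: "V 0 = (if OtE (rev A) = {} then W A else 0)" by (simp add: V_def OtE_Nil W_Nil)
    have "Gf h0 A = (\<Sum>k\<le>n. if k \<noteq> 0 then h0 (take k A) * Gf h0 (drop k A) else 0)"
      unfolding n_def by (rule first_block[OF False])
    also have "\<dots> = (\<Sum>k\<le>n. (if k = 0 then (-1)^n * V 0 else 0) - (-1)^n * ((-1)^k * V k))"
    proof (rule sum.cong[OF refl])
      fix k assume k: "k \<in> {..n}"
      show "(if k \<noteq> 0 then h0 (take k A) * Gf h0 (drop k A) else 0) = (if k = 0 then (-1)^n * V 0 else 0) - (-1)^n * ((-1)^k * V k)"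
      proof (cases "k = 0")
        case True then show ?thesis by simp
      next
        case False
        then have "Gf h0 (drop k A) = Fb (drop k A)" using less.IH[of "drop k A"] \<open>A \<noteq> []\<close> by simp
        then show ?thesis using False k neg1_pow_diff[of k n]
          by (simp add: h0_def Fb_def V_def n_def)
      qed
    qed
    also have "\<dots> = (-1)^n * V 0 - (-1)^n * (\<Sum>k\<le>n. (-1)^k * V k)"
      by (simp add: sum_subtractf sum_distrib_left)
    also have "\<dots> = Fb A" using Z V0 by (simp add: Fb_def n_def)
    finally show ?thesis .
  qed
qed




lemma psums_Cons: "psums (b # \<beta>) = (if \<beta> = [] then {} else insert b ((+) b ` psums \<beta>))"
proof (cases "\<beta> = []")
  case True then show ?thesis by (simp add: psums_def)
next
  case False
  show ?thesis
  proof (intro set_eqI iffI)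
    fix x assume "x \<in> psums (b # \<beta>)"
    then obtain i where i: "x = sum_list (take i (b#\<beta>))" "0 < i" "i < length (b#\<beta>)" by (auto simp: psums_def)
    then obtain j where j: "i = Suc j" by (cases i) auto
    show "x \<in> (if \<beta> = [] then {} else insert b ((+) b ` psums \<beta>))"
    proof (cases "j = 0")
      case True then show ?thesis using i j False by simp
    next
      case False
      then have "sum_list (take j \<beta>) \<in> psums \<beta>" using i j by (auto simp: psums_def)
      then show ?thesis using i j \<open>\<beta> \<noteq> []\<close> by auto
    qed
  next
    fix x assume "x \<in> (if \<beta> = [] then {} else insert b ((+) b ` psums \<beta>))"
    then have "x = b \<or> (\<exists>y\<in>psums \<beta>. x = b + y)" using False by auto
    then show "x \<in> psums (b # \<beta>)"
    proof
      assume "x = b"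
      then have "x = sum_list (take 1 (b#\<beta>))" by simp
      then show ?thesis using False unfolding psums_def by (auto intro!: exI[of _ 1])
    next
      assume "\<exists>y\<in>psums \<beta>. x = b + y"
      then obtain j where "x = b + sum_list (take j \<beta>)" "0 < j" "j < length \<beta>" by (auto simp: psums_def)
      then have "x = sum_list (take (Suc j) (b#\<beta>))" "0 < Suc j" "Suc j < length (b#\<beta>)" by auto
      then show ?thesis unfolding psums_def by blast
    qed
  qed
qed

lemma sum_take_add: "sum_list (take (i + j) (\<alpha>::nat list)) = sum_list (take i \<alpha>) + sum_list (take j (drop i \<alpha>))"
  by (simp add: take_add)

lemma sum_take_mono: "i \<le> j \<Longrightarrow> sum_list (take i (\<alpha>::nat list)) \<le> sum_list (take j \<alpha>)"
  using sum_take_add[of i "j - i" \<alpha>] by simp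

lemma is_comp_sum_pos: "is_comp \<alpha> \<Longrightarrow> \<alpha> \<noteq> [] \<Longrightarrow> sum_list \<alpha> > 0"
  by (cases \<alpha>) (auto simp: is_comp_def)

lemma psums_pos: "is_comp \<beta> \<Longrightarrow> x \<in> psums \<beta> \<Longrightarrow> x > 0"
proof -
  assume c: "is_comp \<beta>" and "x \<in> psums \<beta>"
  then obtain i where "x = sum_list (take i \<beta>)" "0 < i" "i < length \<beta>" by (auto simp: psums_def)
  moreover have "take i \<beta> \<noteq> []" using calculation by auto
  ultimately show "x > 0" using is_comp_sum_pos[OF is_comp_take[OF c], of i] by simp
qed

lemma psums_append_sub:
  assumes "B \<noteq> []" "R \<noteq> []"
  shows "insert (sum_list B) ((+) (sum_list B) ` psums R) \<subseteq> psums (B @ R)"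
proof
  fix x assume "x \<in> insert (sum_list B) ((+) (sum_list B) ` psums R)"
  then have "x = sum_list B \<or> (\<exists>j. x = sum_list B + sum_list (take j R) \<and> 0 < j \<and> j < length R)"
    by (auto simp: psums_def)
  then show "x \<in> psums (B @ R)"
  proof
    assume "x = sum_list B"
    then have "x = sum_list (take (length B) (B @ R))" by simp
    moreover have "0 < length B" "length B < length (B @ R)" using assms by auto
    ultimately show ?thesis unfolding psums_def by blast
  next
    assume "\<exists>j. x = sum_list B + sum_list (take j R) \<and> 0 < j \<and> j < length R"
    then obtain j where j: "x = sum_list B + sum_list (take j R)" "0 < j" "j < length R" by blast
    then have "x = sum_list (take (length B + j) (B @ R))" by simp
    moreover have "0 < length B + j" "length B + j < length (B @ R)" using j by auto
    ultimately show ?thesis unfolding psums_def by blast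
  qed
qed

lemma decomps_Cons_iff: "B # Bs \<in> decomps \<alpha> \<longleftrightarrow> B \<noteq> [] \<and> take (length B) \<alpha> = B \<and> Bs \<in> decomps (drop (length B) \<alpha>)"
  by (auto simp: decomps_def append_eq_conv_conj)

lemma comp_le_decomp:
  "Bs \<in> decomps \<alpha> \<Longrightarrow> psums (map sum_list Bs) \<subseteq> psums \<alpha>"
proof (induction Bs arbitrary: \<alpha>)
  case Nil then show ?case by (simp add: psums_def)
next
  case (Cons B Bs)
  then have B: "B \<noteq> []" "\<alpha> = B @ concat Bs" "Bs \<in> decomps (concat Bs)" by (auto simp: decomps_def)
  show ?case
  proof (cases "Bs = []")
    case True then show ?thesis by (simp add: psums_Cons)
  next
    case False
    then have "concat Bs \<noteq> []" using B(3) by (cases Bs) (auto simp: decomps_def)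
    then have sub: "insert (sum_list B) ((+) (sum_list B) ` psums (concat Bs)) \<subseteq> psums (B @ concat Bs)"
      by (rule psums_append_sub[OF B(1)])
    moreover have "psums (map sum_list Bs) \<subseteq> psums (concat Bs)" using Cons.IH B(3) by blast
    ultimately show ?thesis using B(2) False by (auto simp: psums_Cons)
  qed
qed

lemma is_comp_map_sum: "Bs \<in> decomps \<alpha> \<Longrightarrow> is_comp \<alpha> \<Longrightarrow> is_comp (map sum_list Bs)"
  by (auto simp: is_comp_def decomps_def intro!: is_comp_sum_pos)

lemma comp_le_surj:
  "is_comp \<beta> \<Longrightarrow> is_comp \<alpha> \<Longrightarrow> sum_list \<beta> = sum_list \<alpha> \<Longrightarrow> psums \<beta> \<subseteq> psums \<alpha> \<Longrightarrow> \<exists>Bs\<in>decomps \<alpha>. \<beta> = map sum_list Bs"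
proof (induction \<beta> arbitrary: \<alpha>)
  case Nil
  have "\<alpha> = []"
  proof (rule ccontr)
    assume "\<alpha> \<noteq> []"
    then have "sum_list \<alpha> > 0" using is_comp_sum_pos Nil.prems(2) by blast
    then show False using Nil.prems(3) by (metis less_irrefl sum_list.Nil)
  qed
  then have "[] \<in> decomps \<alpha>" by (simp add: decomps_def)
  then show ?case by force
next
  case (Cons b \<beta>')
  show ?case
  proof (cases "\<beta>' = []")
    case True
    then have "b = sum_list \<alpha>" "b > 0" using Cons.prems by (auto simp: is_comp_def)
    then have "\<alpha> \<noteq> []" by auto
    then have "[\<alpha>] \<in> decomps \<alpha>" by (simp add: decomps_def)
    then show ?thesis using True \<open>b = sum_list \<alpha>\<close> by (auto intro!: bexI[of _ "[\<alpha>]"])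
  next
    case False
    have ps: "psums (b # \<beta>') = insert b ((+) b ` psums \<beta>')" using False by (simp add: psums_Cons)
    have "b \<in> psums \<alpha>" using Cons.prems(4) ps by auto
    then obtain i where i: "b = sum_list (take i \<alpha>)" "0 < i" "i < length \<alpha>" by (auto simp: psums_def)
    define \<alpha>' where "\<alpha>' = drop i \<alpha>"
    have cb': "is_comp \<beta>'" using Cons.prems(1) by (simp add: is_comp_def)
    have ca': "is_comp \<alpha>'" using Cons.prems(2) by (simp add: \<alpha>'_def is_comp_drop)
    have split: "sum_list \<alpha> = b + sum_list \<alpha>'" unfolding i(1) \<alpha>'_def
      by (metis append_take_drop_id sum_list_append)
    have sum': "sum_list \<beta>' = sum_list \<alpha>'" using Cons.prems(3) split by simp
    have sub': "psums \<beta>' \<subseteq> psums \<alpha>'"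
    proof
      fix x assume x: "x \<in> psums \<beta>'"
      then have "x > 0" using psums_pos[OF cb'] by blast
      have "b + x \<in> psums \<alpha>" using Cons.prems(4) ps x by auto
      then obtain i' where i': "b + x = sum_list (take i' \<alpha>)" "0 < i'" "i' < length \<alpha>" by (auto simp: psums_def)
      have "i < i'"
      proof (rule ccontr)
        assume "\<not> i < i'"
        then have "sum_list (take i' \<alpha>) \<le> b" using sum_take_mono[of i' i \<alpha>] i(1) by simp
        then show False using i'(1) \<open>x > 0\<close> by simp
      qed
      then have "sum_list (take i' \<alpha>) = b + sum_list (take (i' - i) \<alpha>')"
        using sum_take_add[of i "i' - i" \<alpha>] i(1) unfolding \<alpha>'_def by simp
      then have "x = sum_list (take (i' - i) \<alpha>')" using i'(1) by simp
      moreover have "0 < i' - i" "i' - i < length \<alpha>'" using \<open>i < i'\<close> i'(3) by (auto simp: \<alpha>'_def)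
      ultimately show "x \<in> psums \<alpha>'" unfolding psums_def by blast
    qed
    obtain Bs' where Bs': "Bs' \<in> decomps \<alpha>'" "\<beta>' = map sum_list Bs'"
      using Cons.IH[OF cb' ca' sum' sub'] by blast
    have c1: "concat (take i \<alpha> # Bs') = \<alpha>" using Bs'(1) unfolding decomps_def \<alpha>'_def by simp
    have c2: "take i \<alpha> \<noteq> []" using i(2,3) by (cases \<alpha>) auto
    have "take i \<alpha> # Bs' \<in> decomps \<alpha>"
      using Bs'(1) c1 c2 unfolding decomps_def by simp
    moreover have "b # \<beta>' = map sum_list (take i \<alpha> # Bs')" using Bs'(2) i(1) by simp
    ultimately show ?thesis by (rule rev_bexI)
  qed
qed

lemma blocks_decomp: "is_comp \<alpha> \<Longrightarrow> Bs \<in> decomps \<alpha> \<Longrightarrow> blocks \<alpha> (map sum_list Bs) = Bs"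
proof (induction Bs arbitrary: \<alpha>)
  case Nil then show ?case by simp
next
  case (Cons B Bs)
  define R where "R = concat Bs"
  have a: "\<alpha> = B @ R" "B \<noteq> []" "Bs \<in> decomps R" using Cons.prems(2) by (auto simp: decomps_def R_def)
  have cR: "is_comp R" using Cons.prems(1) a(1) by (simp add: is_comp_def)
  have L: "(LEAST k. sum_list (take k \<alpha>) = sum_list B) = length B"
  proof (rule Least_equality)
    show "sum_list (take (length B) \<alpha>) = sum_list B" using a by simp
  next
    fix k assume k: "sum_list (take k \<alpha>) = sum_list B"
    show "length B \<le> k"
    proof (rule ccontr)
      assume "\<not> length B \<le> k"
      then have "sum_list (take k \<alpha>) < sum_list (take (length B) \<alpha>)"
        using sum_take_mono_strict[OF Cons.prems(1), of k "length B"] a(1) by simp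
      then show False using k a(1) by simp
    qed
  qed
  show ?case using L a Cons.IH[OF cR a(3)] by (simp add: Let_def)
qed

lemma coeff_c_decomp: "is_comp \<alpha> \<Longrightarrow> Bs \<in> decomps \<alpha> \<Longrightarrow> coeff_c \<alpha> (map sum_list Bs) = prod_list (map W Bs)"
  unfolding coeff_c_def W_def[abs_def] by (simp add: blocks_decomp)

lemma telescope:
  assumes "sorted (L::nat list)" "i < length L"
  shows "sum_list (take i (map (\<lambda>j. L ! Suc j - L ! j) [0..<length L - 1])) = L ! i - L ! 0"
  using assms(2)
proof (induction i)
  case 0 then show ?case by simp
next
  case (Suc i)
  define f where "f = (\<lambda>j. L ! Suc j - L ! j)"
  define m where "m = length L - 1"
  have le1: "L ! 0 \<le> L ! i" "L ! i \<le> L ! Suc i" using assms(1) Suc.prems by (auto intro: sorted_nth_mono)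
  have im: "i < m" using Suc.prems by (simp add: m_def)
  have "take (Suc i) (map f [0..<m]) = take i (map f [0..<m]) @ [map f [0..<m] ! i]"
    using im by (simp add: take_Suc_conv_app_nth)
  also have "map f [0..<m] ! i = L ! Suc i - L ! i" using im by (simp add: f_def)
  finally have "sum_list (take (Suc i) (map f [0..<m])) = sum_list (take i (map f [0..<m])) + (L ! Suc i - L ! i)"
    by simp
  then show ?case using Suc le1 unfolding f_def m_def by simp
qed

lemma psums_comp_of_set:
  fixes S :: "nat set"
  assumes "finite S" "\<forall>x\<in>S. x \<le> n"
  shows "psums (comp_of_set n S) = S"
proof -
  define L where "L = 0 # sorted_list_of_set S @ [n]"
  have sL: "sorted L" using assms unfolding L_def by (auto simp: sorted_append)
  have lenL: "length L = card S + 2" by (simp add: L_def)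
  have L0: "L ! 0 = 0" by (simp add: L_def)
  have c: "comp_of_set n S = map (\<lambda>j. L ! Suc j - L ! j) [0..<length L - 1]"
    by (simp add: comp_of_set_def L_def Let_def)
  have lc: "length (comp_of_set n S) = card S + 1" using c lenL by simp
  have "psums (comp_of_set n S) = {L ! i | i. 0 < i \<and> i < card S + 1}"
  proof -
    have "sum_list (take i (comp_of_set n S)) = L ! i" if "i < card S + 1" for i
      using telescope[OF sL, of i] that lenL L0 c by simp
    then show ?thesis unfolding psums_def lc by (metis (no_types, opaque_lifting))
  qed
  also have "\<dots> = {sorted_list_of_set S ! j | j. j < card S}"
  proof (intro set_eqI iffI)
    fix x assume "x \<in> {L ! i | i. 0 < i \<and> i < card S + 1}"
    then obtain i where "x = L ! i" "0 < i" "i < card S + 1" by auto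
    then show "x \<in> {sorted_list_of_set S ! j | j. j < card S}"
      by (cases i) (auto simp: L_def nth_append)
  next
    fix x assume "x \<in> {sorted_list_of_set S ! j | j. j < card S}"
    then obtain j where "x = sorted_list_of_set S ! j" "j < card S" by auto
    then have "x = L ! Suc j" "0 < Suc j" "Suc j < card S + 1" by (auto simp: L_def nth_append)
    then show "x \<in> {L ! i | i. 0 < i \<and> i < card S + 1}" by blast
  qed
  also have "\<dots> = set (sorted_list_of_set S)" by (auto simp: in_set_conv_nth)
  also have "\<dots> = S" using assms by simp
  finally show ?thesis .
qed

lemma finite_OtE: "finite (OtE \<alpha>)"
  by (rule finite_subset[of _ "{..<length \<alpha>}"]) (auto simp: OtE_def)

lemma sum_take_le: "sum_list (take i (\<alpha>::nat list)) \<le> sum_list \<alpha>"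
  by (metis append_take_drop_id le_add1 sum_list_append)

lemma psums_m_o: "\<alpha> \<noteq> [] \<Longrightarrow> psums (m_o \<alpha>) = (\<lambda>i. sum_list (take i \<alpha>)) ` OtE \<alpha>"
  unfolding m_o_def by (simp add: psums_comp_of_set finite_OtE sum_take_le)

lemma OtE_left: "i \<in> OtE B \<Longrightarrow> i \<in> OtE (B @ R)"
  by (auto simp: OtE_def nth_append)

lemma OtE_right: "i \<in> OtE R \<Longrightarrow> i + length B \<in> OtE (B @ R)"
proof -
  assume "i \<in> OtE R"
  then have i: "1 \<le> i" "i < length R" "odd (R ! (i - 1))" "even (R ! i)" by (auto simp: OtE_def)
  have "i + length B - 1 = length B + (i - 1)" using i by simp
  then have "(B @ R) ! (i + length B - 1) = R ! (i - 1)" by (simp only: nth_append_length_plus)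
  moreover have "(B @ R) ! (i + length B) = R ! i" by (simp add: nth_append)
  ultimately show ?thesis using i by (simp add: OtE_def)
qed

lemma OtE_appendD: "i \<in> OtE (B @ R) \<Longrightarrow> i \<in> OtE B \<or> i = length B \<or> (length B < i \<and> i - length B \<in> OtE R)"
proof -
  assume "i \<in> OtE (B @ R)"
  then have i: "1 \<le> i" "i < length B + length R" "odd ((B @ R) ! (i - 1))" "even ((B @ R) ! i)" by (auto simp: OtE_def)
  consider "i < length B" | "i = length B" | "length B < i" by linarith
  then show ?thesis
  proof cases
    case 1
    then have "(B @ R) ! (i - 1) = B ! (i - 1)" "(B @ R) ! i = B ! i" by (auto simp: nth_append)
    then show ?thesis using i 1 by (auto simp: OtE_def)
  next
    case 2 then show ?thesis by simp
  next
    case 3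
    then have "(B @ R) ! (i - 1) = R ! (i - length B - 1)" "(B @ R) ! i = R ! (i - length B)"
      by (auto simp: nth_append)
    then show ?thesis using i 3 by (auto simp: OtE_def)
  qed
qed

lemma OtE_range: "i \<in> OtE B \<Longrightarrow> 1 \<le> i \<and> i < length B"
  by (simp add: OtE_def)

lemma sum_take_pos: "is_comp \<alpha> \<Longrightarrow> 0 < i \<Longrightarrow> \<alpha> \<noteq> [] \<Longrightarrow> 0 < sum_list (take i \<alpha>)"
  using is_comp_sum_pos[OF is_comp_take, of \<alpha> i] by (cases \<alpha>; cases i) auto

lemma mo_cond:
  "is_comp \<alpha> \<Longrightarrow> Bs \<in> decomps \<alpha> \<Longrightarrow>
   ((\<lambda>i. sum_list (take i \<alpha>)) ` OtE \<alpha> \<subseteq> psums (map sum_list Bs) \<longleftrightarrow> (\<forall>B\<in>set Bs. OtE B = {}))"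
proof (induction Bs arbitrary: \<alpha>)
  case Nil
  then have "\<alpha> = []" by (simp add: decomps_def)
  then show ?case by (simp add: OtE_def)
next
  case (Cons B Bs)
  define R where "R = concat Bs"
  have a: "\<alpha> = B @ R" "B \<noteq> []" "Bs \<in> decomps R" using Cons.prems(2) by (auto simp: decomps_def R_def)
  have cR: "is_comp R" and cB: "is_comp B" using Cons.prems(1) a(1) by (auto simp: is_comp_def)
  show ?case
  proof (cases "Bs = []")
    case True
    then have "R = []" by (simp add: R_def)
    then show ?thesis using True a by (simp add: psums_def)
  next
    case False
    then have Rne: "R \<noteq> []" using a(3) by (cases Bs) (auto simp: decomps_def)
    define P' where "P' = psums (map sum_list Bs)"
    have PS: "psums (map sum_list (B # Bs)) = insert (sum_list B) ((+) (sum_list B) ` P')"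
      using False by (simp add: psums_Cons P'_def)
    have sa: "sum_list (take (j + length B) \<alpha>) = sum_list B + sum_list (take j R)" for j
      using a(1) by (simp add: add.commute)
    have IH: "(\<lambda>i. sum_list (take i R)) ` OtE R \<subseteq> P' \<longleftrightarrow> (\<forall>B\<in>set Bs. OtE B = {})"
      using Cons.IH[OF cR a(3)] by (simp add: P'_def)
    show ?thesis
    proof
      assume h: "(\<lambda>i. sum_list (take i \<alpha>)) ` OtE \<alpha> \<subseteq> psums (map sum_list (B # Bs))"
      have "OtE B = {}"
      proof (rule ccontr)
        assume "OtE B \<noteq> {}"
        then obtain i where i: "i \<in> OtE B" by blast
        then have r: "1 \<le> i" "i < length B" by (auto dest: OtE_range)
        have "i \<in> OtE \<alpha>" using i a(1) by (simp add: OtE_left)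
        then have "sum_list (take i \<alpha>) \<in> insert (sum_list B) ((+) (sum_list B) ` P')" using h PS by auto
        then have "sum_list B \<le> sum_list (take i \<alpha>)" by auto
        moreover have "sum_list (take i \<alpha>) < sum_list (take (length B) \<alpha>)"
          using sum_take_mono_strict[OF Cons.prems(1), of i "length B"] r a(1) by simp
        ultimately show False using a(1) by simp
      qed
      moreover have "(\<lambda>i. sum_list (take i R)) ` OtE R \<subseteq> P'"
      proof
        fix x assume "x \<in> (\<lambda>i. sum_list (take i R)) ` OtE R"
        then obtain j where j: "j \<in> OtE R" "x = sum_list (take j R)" by blast
        have "j + length B \<in> OtE \<alpha>" using j a(1) by (simp add: OtE_right)
        then have "sum_list B + x \<in> insert (sum_list B) ((+) (sum_list B) ` P')" using h PS sa j(2) by force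
        moreover have "x > 0" using j sum_take_pos[OF cR _ Rne] OtE_range[of j R] by auto
        ultimately show "x \<in> P'" by auto
      qed
      ultimately show "\<forall>B'\<in>set (B # Bs). OtE B' = {}" using IH by simp
    next
      assume h: "\<forall>B'\<in>set (B # Bs). OtE B' = {}"
      then have hB: "OtE B = {}" and hR: "(\<lambda>i. sum_list (take i R)) ` OtE R \<subseteq> P'" using IH by auto
      show "(\<lambda>i. sum_list (take i \<alpha>)) ` OtE \<alpha> \<subseteq> psums (map sum_list (B # Bs))"
      proof
        fix x assume "x \<in> (\<lambda>i. sum_list (take i \<alpha>)) ` OtE \<alpha>"
        then obtain i where i: "i \<in> OtE \<alpha>" "x = sum_list (take i \<alpha>)" by blast
        then consider "i = length B" | "length B < i \<and> i - length B \<in> OtE R"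
          using OtE_appendD[of i B R] a(1) hB by auto
        then show "x \<in> psums (map sum_list (B # Bs))"
        proof cases
          case 1 then show ?thesis using i a(1) PS by simp
        next
          case 2
          then have "x = sum_list B + sum_list (take (i - length B) R)" using i(2) sa[of "i - length B"] by simp
          moreover have "sum_list (take (i - length B) R) \<in> P'" using hR 2 by auto
          ultimately show ?thesis using PS by auto
        qed
      qed
    qed
  qed
qed

definition hW :: "nat list \<Rightarrow> rat" where "hW B = (if OtE B = {} then W B else 0)"

lemma mo_cond2: "is_comp \<alpha> \<Longrightarrow> Bs \<in> decomps \<alpha> \<Longrightarrow>
   comp_le (m_o \<alpha>) (map sum_list Bs) \<longleftrightarrow> (\<forall>B\<in>set Bs. OtE B = {})"
proof (cases "\<alpha> = []")
  case True
  assume "Bs \<in> decomps \<alpha>"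
  then have "Bs = []" using True by (simp add: decomps_Nil)
  then show ?thesis using True by (simp add: comp_le_def m_o_def psums_def)
next
  case False
  assume "is_comp \<alpha>" "Bs \<in> decomps \<alpha>"
  then show ?thesis using mo_cond psums_m_o[OF False] by (simp add: comp_le_def)
qed

lemma shuffle_index_eq:
  assumes c: "is_comp \<alpha>"
  shows "shuffle_index \<alpha> = map sum_list ` {Bs\<in>decomps \<alpha>. \<forall>B\<in>set Bs. OtE B = {}}"
proof (intro set_eqI iffI)
  fix \<beta> assume "\<beta> \<in> shuffle_index \<alpha>"
  then have b: "is_comp \<beta>" "sum_list \<beta> = sum_list \<alpha>" "comp_le (m_o \<alpha>) \<beta>" "comp_le \<beta> \<alpha>"
    by (auto simp: shuffle_index_def)
  obtain Bs where Bs: "Bs \<in> decomps \<alpha>" "\<beta> = map sum_list Bs"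
    using comp_le_surj[OF b(1) c b(2)] b(4) by (auto simp: comp_le_def)
  then have "\<forall>B\<in>set Bs. OtE B = {}" using mo_cond2[OF c Bs(1)] b(3) by simp
  then show "\<beta> \<in> map sum_list ` {Bs\<in>decomps \<alpha>. \<forall>B\<in>set Bs. OtE B = {}}" using Bs by blast
next
  fix \<beta> assume "\<beta> \<in> map sum_list ` {Bs\<in>decomps \<alpha>. \<forall>B\<in>set Bs. OtE B = {}}"
  then obtain Bs where Bs: "Bs \<in> decomps \<alpha>" "\<forall>B\<in>set Bs. OtE B = {}" "\<beta> = map sum_list Bs" by blast
  have "is_comp \<beta>" using is_comp_map_sum[OF Bs(1) c] Bs(3) by simp
  moreover have "sum_list \<beta> = sum_list \<alpha>" using Bs(1,3) by (simp add: decomps_def flip: sum_list_concat_nat)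
  moreover have "comp_le \<beta> \<alpha>" using comp_le_decomp[OF Bs(1)] Bs(3) by (simp add: comp_le_def)
  moreover have "comp_le (m_o \<alpha>) \<beta>" using mo_cond2[OF c Bs(1)] Bs(2,3) by simp
  ultimately show "\<beta> \<in> shuffle_index \<alpha>" by (simp add: shuffle_index_def)
qed

lemma shuffle_reindex:
  assumes c: "is_comp \<alpha>"
  shows "(\<Sum>\<beta>\<in>shuffle_index \<alpha>. coeff_c \<alpha> \<beta> * f \<beta>) = (\<Sum>Bs\<in>decomps \<alpha>. prod_list (map hW Bs) * f (map sum_list Bs))"
proof -
  define D' where "D' = {Bs\<in>decomps \<alpha>. \<forall>B\<in>set Bs. OtE B = {}}"
  have inj: "inj_on (map sum_list) D'"
  proof (rule inj_onI)
    fix X Y assume "X \<in> D'" "Y \<in> D'" "map sum_list X = map sum_list Y"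
    then show "X = Y" using blocks_decomp[OF c] unfolding D'_def by (metis (no_types, lifting) mem_Collect_eq)
  qed
  have "(\<Sum>\<beta>\<in>shuffle_index \<alpha>. coeff_c \<alpha> \<beta> * f \<beta>) = (\<Sum>Bs\<in>D'. coeff_c \<alpha> (map sum_list Bs) * f (map sum_list Bs))"
    unfolding shuffle_index_eq[OF c] D'_def[symmetric] by (simp add: sum.reindex[OF inj])
  also have "\<dots> = (\<Sum>Bs\<in>D'. prod_list (map hW Bs) * f (map sum_list Bs))"
  proof (rule sum.cong[OF refl])
    fix Bs assume "Bs \<in> D'"
    then have d: "Bs \<in> decomps \<alpha>" "\<forall>B\<in>set Bs. OtE B = {}" by (auto simp: D'_def)
    then have m: "map hW Bs = map W Bs" by (simp add: hW_def)
    show "coeff_c \<alpha> (map sum_list Bs) * f (map sum_list Bs) = prod_list (map hW Bs) * f (map sum_list Bs)"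
      by (simp only: coeff_c_decomp[OF c d(1)] m)
  qed
  also have "\<dots> = (\<Sum>Bs\<in>decomps \<alpha>. prod_list (map hW Bs) * f (map sum_list Bs))"
  proof (rule sum.mono_neutral_left)
    show "finite (decomps \<alpha>)" by (rule finite_decomps)
    show "D' \<subseteq> decomps \<alpha>" by (auto simp: D'_def)
    show "\<forall>Bs\<in>decomps \<alpha> - D'. prod_list (map hW Bs) * f (map sum_list Bs) = 0"
    proof
      fix Bs assume "Bs \<in> decomps \<alpha> - D'"
      then obtain B where "B \<in> set Bs" "OtE B \<noteq> {}" by (auto simp: D'_def)
      then have "0 \<in> set (map hW Bs)" by (force simp: hW_def)
      then show "prod_list (map hW Bs) * f (map sum_list Bs) = 0" by (simp add: prod_list_zero_iff)
    qed
  qed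
  finally show ?thesis .
qed



lemma prod_neg: "prod_list (map (\<lambda>B. - (g B :: rat)) Bs) = (-1)^length Bs * prod_list (map g Bs)"
  by (induction Bs) auto

lemma prod_sign: "prod_list (map (\<lambda>A. (-1)^length A * (g A :: rat)) As) = (-1)^length (concat As) * prod_list (map g As)"
  by (induction As) (auto simp: power_add)

lemma W_rev: "W (rev A) = W A"
  by (simp add: W_def flip: rev_filter)

lemma prod_list_rev_rat: "prod_list (rev xs) = prod_list (xs::rat list)"
  by (induction xs) (auto simp: mult.commute)

lemma decomps_rev: "As \<in> decomps \<alpha> \<Longrightarrow> rev (map rev As) \<in> decomps (rev \<alpha>)"
  by (auto simp: decomps_def rev_concat rev_map)

lemma Gf_h0: "Gf h0 = Fb"
  using single_block by (simp add: fun_eq_iff)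

theorem mainTheorem4:
  fixes \<alpha> :: "nat list"
  assumes "is_comp \<alpha>"
  shows "antipode_shuffleS \<alpha> = (\<lambda>e. (-1) ^ length \<alpha> * shuffleS (rev \<alpha>) e)"
proof
  fix e
  define \<gamma> where "\<gamma> = flat e"
  have crev: "is_comp (rev \<alpha>)" using assms by (simp add: is_comp_def)
  have "antipode_shuffleS \<alpha> e = (\<Sum>Bs\<in>decomps \<alpha>. prod_list (map hW Bs) * antipodeM (map sum_list Bs) e)"
    unfolding antipode_shuffleS_def by (rule shuffle_reindex[OF assms])
  also have "\<dots> = (\<Sum>Bs\<in>decomps \<alpha>. prod_list (map h0 Bs) * rcn \<gamma> (map sum_list Bs))"
  proof (rule sum.cong[OF refl])
    fix Bs assume Bs: "Bs \<in> decomps \<alpha>"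
    have "antipodeM (map sum_list Bs) e = (-1)^length Bs * rcn \<gamma> (map sum_list Bs)"
      using antipode_formula[OF is_comp_map_sum[OF Bs assms]] by (simp add: \<gamma>_def)
    moreover have "prod_list (map h0 Bs) = (-1)^length Bs * prod_list (map hW Bs)"
      unfolding h0_def hW_def[symmetric] by (rule prod_neg)
    ultimately show "prod_list (map hW Bs) * antipodeM (map sum_list Bs) e = prod_list (map h0 Bs) * rcn \<gamma> (map sum_list Bs)"
      by simp
  qed
  also have "\<dots> = (\<Sum>As\<in>decomps \<alpha>. (if rev (map sum_list As) = \<gamma> then 1 else 0) * prod_list (map Fb As))"
    by (simp only: factor Gf_h0)
  also have "\<dots> = (-1)^length \<alpha> * (\<Sum>As\<in>decomps (rev \<alpha>). prod_list (map hW As) * (if \<gamma> = map sum_list As then 1 else 0))"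
  proof -
    have "(\<Sum>As\<in>decomps \<alpha>. (if rev (map sum_list As) = \<gamma> then 1 else 0) * prod_list (map Fb As))
       = (\<Sum>As\<in>decomps (rev \<alpha>). (-1)^length \<alpha> * (prod_list (map hW As) * (if \<gamma> = map sum_list As then 1 else 0)))"
    proof (rule sum.reindex_bij_witness[where i = "\<lambda>As. rev (map rev As)" and j = "\<lambda>As. rev (map rev As)"])
      fix As assume "As \<in> decomps (rev \<alpha>)"
      then show "rev (map rev (rev (map rev As))) = As" "rev (map rev As) \<in> decomps \<alpha>"
        using decomps_rev[of As "rev \<alpha>"] by (simp_all add: rev_map)
    next
      fix As assume As: "As \<in> decomps \<alpha>"
      show "rev (map rev (rev (map rev As))) = As" by (simp add: rev_map)
      show "rev (map rev As) \<in> decomps (rev \<alpha>)" using decomps_rev[OF As] .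
      have len: "length (concat As) = length \<alpha>" using As by (simp add: decomps_def)
      have "prod_list (map Fb As) = (-1)^length \<alpha> * prod_list (map (\<lambda>A. if OtE (rev A) = {} then W A else 0) As)"
        unfolding Fb_def prod_sign len ..
      moreover have "prod_list (map hW (rev (map rev As))) = prod_list (map (\<lambda>A. if OtE (rev A) = {} then W A else 0) As)"
      proof -
        have "map hW (rev (map rev As)) = rev (map (\<lambda>A. hW (rev A)) As)" by (simp add: rev_map)
        then have "prod_list (map hW (rev (map rev As))) = prod_list (map (\<lambda>A. hW (rev A)) As)"
          by (simp only: prod_list_rev_rat)
        moreover have "(\<lambda>A. hW (rev A)) = (\<lambda>A. if OtE (rev A) = {} then W A else 0)"
          by (simp add: fun_eq_iff hW_def W_rev)
        ultimately show ?thesis by simp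
      qed
      moreover have "map sum_list (rev (map rev As)) = rev (map sum_list As)"
        by (simp add: rev_map comp_def)
      ultimately show "(-1)^length \<alpha> * (prod_list (map hW (rev (map rev As))) * (if \<gamma> = map sum_list (rev (map rev As)) then 1 else 0))
          = (if rev (map sum_list As) = \<gamma> then 1 else 0) * prod_list (map Fb As)"
        by auto
    qed
    then show ?thesis by (simp add: sum_distrib_left)
  qed
  also have "\<dots> = (-1)^length \<alpha> * shuffleS (rev \<alpha>) e"
    unfolding shuffleS_def shuffle_reindex[OF crev] monoM_flat \<gamma>_def by (simp add: eq_commute)
  finally show "antipode_shuffleS \<alpha> e = (-1)^length \<alpha> * shuffleS (rev \<alpha>) e" .
qed


end
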